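(* Let $\mathbf{A}$ be a real $n\times n$ matrix that is strictly totally $J$-sign-symmetric (STJS). Then all eigenvalues of $\mathbf{A}$ are positive and simple: $$\rho(\mathbf{A})=\lambda_1>\lambda_2>\cdots>\lambda_n>0.$$
   Context: For $J\subseteq[m]=\{1,\ldots,m\}$ with $J^c=[m]\setminus J$, an $m\times m$ matrix $(a_{ik})$ is strictly $J$-sign-symmetric if $a_{ik}>0$ for $(i,k)\in(J\times J)\cup(J^c\times J^c)$ and $a_{ik}<0$ for $(i,k)\in(J\times J^c)\cup(J^c\times J)$; it is strictly sign-symmetric in this sense if it is strictly $J$-sign-symmetric for some $J$. The $j$th compound matrix $\mathbf{A}^{(j)}$ is the $\binom{n}{j}\times\binom{n}{j}$ matrix of all $j\times j$ minors of $\mathbf{A}$ with row and column index sets listed in lexicographic order. $\mathbf{A}$ is STJS if $\mathbf{A}$ is strictly $J$-sign-symmetric for some $J\subseteq[n]$ and, for every $j=2,\ldots,n$, $\mathbf{A}^{(j)}$ is strictly $J_j$-sign-symmetric for some subset $J_j$ of its index set. *)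

theory Defs
  imports "Jordan_Normal_Form.Spectral_Radius" "Jordan_Normal_Form.DL_Submatrix"
begin

definition strictly_sign_symmetric_on :: "'i set \<Rightarrow> ('i \<Rightarrow> 'i \<Rightarrow> real) \<Rightarrow> bool" where
  "strictly_sign_symmetric_on S a \<longleftrightarrow>
     (\<exists>J \<subseteq> S. \<forall>i\<in>S. \<forall>k\<in>S.
        ((i \<in> J) = (k \<in> J) \<longrightarrow> a i k > 0) \<and> ((i \<in> J) \<noteq> (k \<in> J) \<longrightarrow> a i k < 0))"

text \<open>The j-th compound matrix, indexed by j-subsets of the index set {0..<n}
  (rows/columns of a minor taken in increasing order). Its sign-symmetry does not
  depend on how the j-subsets are enumerated, so the lexicographic listing is
  represented by indexing with the subsets themselves.\<close>
definition compound_entry :: "real mat \<Rightarrow> nat set \<Rightarrow> nat set \<Rightarrow> real" where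
  "compound_entry A I K = det (submatrix A I K)"

definition STJS :: "nat \<Rightarrow> real mat \<Rightarrow> bool" where
  "STJS n A \<longleftrightarrow> A \<in> carrier_mat n n \<and>
     strictly_sign_symmetric_on {..<n} (\<lambda>i k. A $$ (i, k)) \<and>
     (\<forall>j\<in>{2..n}. strictly_sign_symmetric_on {I. I \<subseteq> {..<n} \<and> card I = j}
                                              (compound_entry A))"

end

theory Submission
  imports Defs
begin



lemma card_less_pick: fixes L :: "nat set" assumes "finite L" "x \<in> L" shows "card {a\<in>L. a < x} < card L"
proof -
  have "x \<notin> {a\<in>L. a < x}" by auto
  hence "{a\<in>L. a < x} \<subset> L" using assms by auto
  thus ?thesis using assms psubset_card_mono by blast
qed

lemma pick_in: "finite L \<Longrightarrow> r < card L \<Longrightarrow> pick L r \<in> L"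
  using pick_in_set by blast

lemma pick_inj: "finite L \<Longrightarrow> inj_on (pick L) {0..<card L}"
  unfolding inj_on_def by (metis atLeastLessThan_iff linorder_neqE_nat pick_mono less_irrefl)

lemma pick_image: assumes "finite L" shows "pick L ` {0..<card L} = L"
proof
  show "pick L ` {0..<card L} \<subseteq> L" using pick_in[OF assms] by auto
  show "L \<subseteq> pick L ` {0..<card L}"
  proof
    fix x assume x: "x \<in> L"
    hence "x = pick L (card {a\<in>L. a < x})" using pick_card_in_set by metis
    with card_less_pick[OF assms x] show "x \<in> pick L ` {0..<card L}" by auto
  qed
qed

definition csel :: "'a mat \<Rightarrow> nat \<Rightarrow> nat set \<Rightarrow> 'a mat" where
  "csel X j L = mat j j (\<lambda>(r,c). X $$ (r, pick L c))"
definition rsel :: "'a mat \<Rightarrow> nat \<Rightarrow> nat set \<Rightarrow> 'a mat" where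
  "rsel Y j L = mat j j (\<lambda>(r,c). Y $$ (pick L r, c))"

lemma cauchy_binet_step1:
  fixes X Y :: "'a::comm_ring_1 mat"
  assumes X: "X \<in> carrier_mat j n" and Y: "Y \<in> carrier_mat n j"
  shows "det (X * Y) = (\<Sum>f \<in> PiE {0..<j} (\<lambda>_. {0..<n}). (\<Prod>r=0..<j. X $$ (r, f r)) * det (mat j j (\<lambda>(r,c). Y $$ (f r, c))))"
proof -
  let ?P = "{p. p permutes {0..<j}}"
  let ?F = "PiE {0..<j} (\<lambda>_. {0..<n})"
  have XY: "X*Y \<in> carrier_mat j j" using X Y by auto
  have "det (X*Y) = (\<Sum>\<sigma> \<in> ?P. signof \<sigma> * (\<Prod>r=0..<j. \<Sum>k=0..<n. X $$ (r,k) * Y $$ (k, \<sigma> r)))"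
    unfolding det_def'[OF XY]
  proof (rule sum.cong[OF refl])
    fix \<sigma> assume "\<sigma> \<in> ?P"
    hence s: "\<And>r. r < j \<Longrightarrow> \<sigma> r < j" using permutes_in_image by fastforce
    show "signof \<sigma> * (\<Prod>i = 0..<j. (X * Y) $$ (i, \<sigma> i)) = signof \<sigma> * (\<Prod>r=0..<j. \<Sum>k=0..<n. X $$ (r,k) * Y $$ (k, \<sigma> r))"
      by (rule arg_cong[where f="\<lambda>x. _ * x"], rule prod.cong[OF refl], insert X Y s, auto simp: scalar_prod_def)
  qed
  also have "\<dots> = (\<Sum>\<sigma> \<in> ?P. signof \<sigma> * (\<Sum>f\<in>?F. \<Prod>r=0..<j. X $$ (r,f r) * Y $$ (f r, \<sigma> r)))"
    by (subst prod_sum_PiE, auto)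
  also have "\<dots> = (\<Sum>\<sigma> \<in> ?P. \<Sum>f\<in>?F. (\<Prod>r=0..<j. X $$ (r,f r)) * (signof \<sigma> * (\<Prod>r=0..<j. Y $$ (f r, \<sigma> r))))"
    by (simp add: sum_distrib_left prod.distrib ac_simps)
  also have "\<dots> = (\<Sum>f\<in>?F. \<Sum>\<sigma> \<in> ?P. (\<Prod>r=0..<j. X $$ (r,f r)) * (signof \<sigma> * (\<Prod>r=0..<j. Y $$ (f r, \<sigma> r))))"
    by (rule sum.swap)
  also have "\<dots> = (\<Sum>f\<in>?F. (\<Prod>r=0..<j. X $$ (r, f r)) * det (mat j j (\<lambda>(r,c). Y $$ (f r, c))))"
  proof (rule sum.cong[OF refl])
    fix f assume f: "f \<in> ?F"
    show "(\<Sum>\<sigma> \<in> ?P. (\<Prod>r=0..<j. X $$ (r,f r)) * (signof \<sigma> * (\<Prod>r=0..<j. Y $$ (f r, \<sigma> r)))) = 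
      (\<Prod>r=0..<j. X $$ (r, f r)) * det (mat j j (\<lambda>(r,c). Y $$ (f r, c)))"
      unfolding det_def'[OF mat_carrier] sum_distrib_left
    proof (rule sum.cong[OF refl])
      fix \<sigma> assume "\<sigma> \<in> ?P"
      hence s: "\<And>r. r < j \<Longrightarrow> \<sigma> r < j" using permutes_in_image by fastforce
      show "(\<Prod>r=0..<j. X $$ (r,f r)) * (signof \<sigma> * (\<Prod>r=0..<j. Y $$ (f r, \<sigma> r))) =
         (\<Prod>r=0..<j. X $$ (r,f r)) * (signof \<sigma> * (\<Prod>i=0..<j. mat j j (\<lambda>(r,c). Y $$ (f r, c)) $$ (i, \<sigma> i)))"
        by (intro arg_cong[where f="\<lambda>x. _ * (_ * x)"] prod.cong refl, insert s, auto)
    qed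
  qed
  finally show ?thesis .
qed

lemma csel_carrier[simp]: "csel X j L \<in> carrier_mat j j" by (simp add: csel_def)
lemma rsel_carrier[simp]: "rsel X j L \<in> carrier_mat j j" by (simp add: rsel_def)

lemma cauchy_binet:
  fixes X Y :: "'a::comm_ring_1 mat"
  assumes X: "X \<in> carrier_mat j n" and Y: "Y \<in> carrier_mat n j"
  shows "det (X * Y) = (\<Sum>L \<in> {L. L \<subseteq> {0..<n} \<and> card L = j}. det (csel X j L) * det (rsel Y j L))"
proof -
  let ?P = "{p. p permutes {0..<j}}"
  let ?F = "PiE {0..<j} (\<lambda>_. {0..<n})"
  let ?Fi = "{f \<in> ?F. inj_on f {0..<j}}"
  let ?S = "{L. L \<subseteq> {0..<n} \<and> card L = j}"
  let ?h = "\<lambda>f. (\<Prod>r=0..<j. X $$ (r, f r)) * det (mat j j (\<lambda>(r,c). Y $$ (f r, c)))"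
  have finF: "finite ?F" by (intro finite_PiE, auto)
  have "det (X*Y) = sum ?h ?F" by (rule cauchy_binet_step1[OF X Y])
  also have "\<dots> = sum ?h ?Fi + sum ?h (?F - ?Fi)"
    using sum.subset_diff[of ?Fi ?F ?h] finF by (simp add: add.commute)
  also have "sum ?h (?F - ?Fi) = 0"
  proof (rule sum.neutral, intro ballI)
    fix f assume "f \<in> ?F - ?Fi"
    then obtain r1 r2 where r: "r1 < j" "r2 < j" "r1 \<noteq> r2" "f r1 = f r2" unfolding inj_on_def by auto
    have "det (mat j j (\<lambda>(r,c). Y $$ (f r, c))) = 0"
      by (rule det_identical_rows[OF mat_carrier r(3) r(1) r(2)], insert r, auto)
    thus "?h f = 0" by simp
  qed
  also have "sum ?h ?Fi = (\<Sum>(L,\<tau>) \<in> Sigma ?S (\<lambda>_. ?P). (\<Prod>r=0..<j. X $$ (r, pick L (\<tau> r))) * (signof \<tau> * det (rsel Y j L)))"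
  proof (rule sum.reindex_bij_witness[symmetric, where j = "\<lambda>(L,\<tau>). restrict (\<lambda>r. pick L (\<tau> r)) {0..<j}"
      and i = "\<lambda>f. (f ` {0..<j}, \<lambda>r. if r < j then card {a \<in> f ` {0..<j}. a < f r} else r)"])
    fix a assume a: "a \<in> Sigma ?S (\<lambda>_. ?P)"
    obtain L \<tau> where a: "a = (L,\<tau>)" and L: "L \<subseteq> {0..<n}" "card L = j" and tau: "\<tau> permutes {0..<j}" using a by auto
    have finL: "finite L" using L finite_subset by blast
    have tj: "\<And>r. r < j \<Longrightarrow> \<tau> r < j" using permutes_in_image[OF tau] by auto
    have tout: "\<And>r. r \<ge> j \<Longrightarrow> \<tau> r = r" using permutes_not_in[OF tau] by auto
    have im: "(\<lambda>r. pick L (\<tau> r)) ` {0..<j} = L"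
    proof -
      have "(\<lambda>r. pick L (\<tau> r)) ` {0..<j} = pick L ` (\<tau> ` {0..<j})" by auto
      also have "\<tau> ` {0..<j} = {0..<j}" by (rule permutes_image[OF tau])
      finally show ?thesis using pick_image[OF finL] L by simp
    qed
    have im2: "restrict (\<lambda>r. pick L (\<tau> r)) {0..<j} ` {0..<j} = L" using im by auto
    show "(\<lambda>f. (f ` {0..<j}, \<lambda>r. if r < j then card {a \<in> f ` {0..<j}. a < f r} else r))
       ((\<lambda>(L,\<tau>). restrict (\<lambda>r. pick L (\<tau> r)) {0..<j}) a) = a"
    proof -
      have eq1: "r < j \<Longrightarrow> card {a \<in> L. a < pick L (\<tau> r)} = \<tau> r" for r
        using tj card_pick[of "\<tau> r" L] L finL by auto
      have eq2: "\<not> r < j \<Longrightarrow> r = \<tau> r" for r using tout by auto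
      show ?thesis unfolding a split im2 using eq1 eq2 by (auto simp: fun_eq_iff)
    qed
    show "(\<lambda>(L,\<tau>). restrict (\<lambda>r. pick L (\<tau> r)) {0..<j}) a \<in> ?Fi"
    proof -
      have "inj_on (\<lambda>r. pick L (\<tau> r)) {0..<j}"
      proof (rule comp_inj_on[of \<tau>, unfolded o_def])
        show "inj_on \<tau> {0..<j}" using tau permutes_inj_on by blast
        show "inj_on (pick L) (\<tau> ` {0..<j})" unfolding permutes_image[OF tau] using pick_inj[OF finL] L by simp
      qed
      moreover have "\<And>r. r < j \<Longrightarrow> pick L (\<tau> r) < n" using pick_in[OF finL] tj L by force
      ultimately show ?thesis unfolding a by (auto simp: inj_on_def)
    qed
    show "?h ((\<lambda>(L,\<tau>). restrict (\<lambda>r. pick L (\<tau> r)) {0..<j}) a) = 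
      (case a of (L,\<tau>) \<Rightarrow> (\<Prod>r=0..<j. X $$ (r, pick L (\<tau> r))) * (signof \<tau> * det (rsel Y j L)))"
    proof -
      have "det (mat j j (\<lambda>(r,c). Y $$ (restrict (\<lambda>r. pick L (\<tau> r)) {0..<j} r, c))) = 
            det (mat j j (\<lambda>(r,c). rsel Y j L $$ (\<tau> r, c)))"
        by (rule arg_cong[where f = det], rule eq_matI, insert tj, auto simp: rsel_def)
      also have "\<dots> = signof \<tau> * det (rsel Y j L)"
        by (rule det_permute_rows[OF _ tau], auto simp: rsel_def)
      finally show ?thesis unfolding a by simp
    qed
  next
    fix f assume f: "f \<in> ?Fi"
    let ?L = "f ` {0..<j}"
    have finL: "finite ?L" by auto
    have cL: "card ?L = j" using f card_image by fastforce
    have fn: "\<And>r. r < j \<Longrightarrow> f r < n" using f by auto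
    show "(\<lambda>(L,\<tau>). restrict (\<lambda>r. pick L (\<tau> r)) {0..<j}) 
       ((\<lambda>f. (f ` {0..<j}, \<lambda>r. if r < j then card {a \<in> f ` {0..<j}. a < f r} else r)) f) = f"
    proof -
      have eq1: "r < j \<Longrightarrow> pick ?L (card {a \<in> ?L. a < f r}) = f r" for r
        using pick_card_in_set[of "f r" ?L] by auto
      have eq2: "\<not> r < j \<Longrightarrow> undefined = f r" for r
        using f by (auto simp: PiE_def extensional_def)
      show ?thesis using eq1 eq2 by (auto simp: fun_eq_iff)
    qed
    show "(\<lambda>f. (f ` {0..<j}, \<lambda>r. if r < j then card {a \<in> f ` {0..<j}. a < f r} else r)) f \<in> Sigma ?S (\<lambda>_. ?P)"
    proof -
      let ?t = "\<lambda>r. if r < j then card {a \<in> ?L. a < f r} else r"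
      have "?t permutes {0..<j}"
      proof (rule inj_on_nat_permutes)
        show "?t \<in> {0..<j} \<rightarrow> {0..<j}" using card_less_pick[OF finL] cL by auto
        show "inj_on ?t {0..<j}"
        proof (rule inj_onI)
          fix x y assume xy: "x \<in> {0..<j}" "y \<in> {0..<j}" "?t x = ?t y"
          hence "card {a \<in> ?L. a < f x} = card {a \<in> ?L. a < f y}" using xy by simp
          hence "pick ?L (card {a \<in> ?L. a < f x}) = pick ?L (card {a \<in> ?L. a < f y})" by simp
          moreover have "f x \<in> ?L" "f y \<in> ?L" using xy by auto
          ultimately have "f x = f y" using pick_card_in_set by metis
          thus "x = y" using f xy unfolding inj_on_def by auto
        qed
      qed auto
      thus ?thesis using cL fn by auto
    qed
  qed
  also have "\<dots> = (\<Sum>L \<in> ?S. \<Sum>\<tau> \<in> ?P. (\<Prod>r=0..<j. X $$ (r, pick L (\<tau> r))) * (signof \<tau> * det (rsel Y j L)))"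
    by (rule sum.Sigma[symmetric], auto intro: finite_subset finite_permutations)
  also have "\<dots> = (\<Sum>L \<in> ?S. det (csel X j L) * det (rsel Y j L))"
  proof (rule sum.cong[OF refl])
    fix L assume L: "L \<in> ?S"
    show "(\<Sum>\<tau> \<in> ?P. (\<Prod>r=0..<j. X $$ (r, pick L (\<tau> r))) * (signof \<tau> * det (rsel Y j L))) = det (csel X j L) * det (rsel Y j L)"
      unfolding det_def'[of "csel X j L" j, OF csel_carrier] sum_distrib_right
    proof (rule sum.cong[OF refl])
      fix \<tau> assume "\<tau> \<in> ?P"
      hence s: "\<And>r. r < j \<Longrightarrow> \<tau> r < j" using permutes_in_image by fastforce
      have "(\<Prod>r=0..<j. X $$ (r, pick L (\<tau> r))) = (\<Prod>i=0..<j. csel X j L $$ (i, \<tau> i))"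
        by (rule prod.cong[OF refl], insert s, auto simp: csel_def)
      thus "(\<Prod>r=0..<j. X $$ (r, pick L (\<tau> r))) * (signof \<tau> * det (rsel Y j L)) =
         signof \<tau> * (\<Prod>i=0..<j. csel X j L $$ (i, \<tau> i)) * det (rsel Y j L)" by (simp add: ac_simps)
    qed
  qed
  finally show ?thesis by simp
qed




fun sub_list :: "nat \<Rightarrow> nat \<Rightarrow> nat set list" where
  "sub_list 0 j = (if j = 0 then [{}] else [])"
| "sub_list (Suc n) j = sub_list n j @ (if j = 0 then [] else map (insert n) (sub_list n (j - 1)))"

lemma sub_list_set: "set (sub_list n j) = {L. L \<subseteq> {0..<n} \<and> card L = j}"
proof (induction n arbitrary: j)
  case 0 then show ?case by auto
next
  case (Suc n)
  show ?case
  proof (cases j)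
    case 0
    have "{L. L \<subseteq> {0..<Suc n} \<and> card L = j} = {{}}" using 0
      by (auto dest: finite_subset[OF _ finite_atLeastLessThan] simp: card_0_eq)
    moreover have "{L. L \<subseteq> {0..<n} \<and> card L = j} = {{}}" using 0
      by (auto dest: finite_subset[OF _ finite_atLeastLessThan] simp: card_0_eq)
    ultimately show ?thesis using Suc.IH[of j] 0 by simp
  next
    case (Suc j')
    have "{L. L \<subseteq> {0..<Suc n} \<and> card L = j} = {L. L \<subseteq> {0..<n} \<and> card L = j} \<union> insert n ` {L. L \<subseteq> {0..<n} \<and> card L = j'}"
    proof (intro equalityI subsetI)
      fix L assume L: "L \<in> {L. L \<subseteq> {0..<Suc n} \<and> card L = j}"
      have finL: "finite L" using L finite_subset by blast
      show "L \<in> {L. L \<subseteq> {0..<n} \<and> card L = j} \<union> insert n ` {L. L \<subseteq> {0..<n} \<and> card L = j'}"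
      proof (cases "n \<in> L")
        case True
        have "L = insert n (L - {n})" using True by auto
        moreover have "L - {n} \<subseteq> {0..<n}" using L by auto
        moreover have "card (L - {n}) = j'" using L True Suc finL by (simp add: card_Diff_singleton)
        ultimately show ?thesis by blast
      next
        case False
        hence "L \<subseteq> {0..<n}" using L by (auto simp: less_Suc_eq)
        thus ?thesis using L by auto
      qed
    next
      fix L assume L: "L \<in> {L. L \<subseteq> {0..<n} \<and> card L = j} \<union> insert n ` {L. L \<subseteq> {0..<n} \<and> card L = j'}"
      show "L \<in> {L. L \<subseteq> {0..<Suc n} \<and> card L = j}"
      proof (cases "L \<in> {L. L \<subseteq> {0..<n} \<and> card L = j}")
        case True thus ?thesis by auto
      next
        case False
        then obtain L' where L': "L = insert n L'" "L' \<subseteq> {0..<n}" "card L' = j'" using L by auto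
        have "n \<notin> L'" using L' by auto
        moreover have "finite L'" using L' finite_subset by blast
        ultimately have "card L = j" using L' Suc by simp
        thus ?thesis using L' by auto
      qed
    qed
    thus ?thesis using Suc.IH[of j] Suc.IH[of j'] Suc by simp
  qed
qed

lemma sub_list_distinct: "distinct (sub_list n j)"
proof (induction n arbitrary: j)
  case 0 then show ?case by auto
next
  case (Suc n)
  have inj: "inj_on (insert n) (set (sub_list n (j - 1)))"
    by (rule inj_on_inverseI[of _ "\<lambda>S. S - {n}"], unfold sub_list_set, auto)
  have disj: "set (sub_list n j) \<inter> insert n ` set (sub_list n (j - 1)) = {}"
    unfolding sub_list_set by auto
  show ?case using Suc.IH[of j] Suc.IH[of "j - 1"] inj disj by (auto simp: distinct_map)
qed

definition sub :: "'a mat \<Rightarrow> nat \<Rightarrow> nat set \<Rightarrow> nat set \<Rightarrow> 'a mat" where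
  "sub A j I K = mat j j (\<lambda>(r,c). A $$ (pick I r, pick K c))"

lemma sub_carrier[simp]: "sub A j I K \<in> carrier_mat j j" by (simp add: sub_def)

definition cmpd :: "'a::comm_ring_1 mat \<Rightarrow> nat \<Rightarrow> 'a mat" where
  "cmpd A j = mat (length (sub_list (dim_row A) j)) (length (sub_list (dim_row A) j))
     (\<lambda>(p,q). det (sub A j (sub_list (dim_row A) j ! p) (sub_list (dim_row A) j ! q)))"

lemma cmpd_carrier: "A \<in> carrier_mat n n \<Longrightarrow> cmpd A j \<in> carrier_mat (length (sub_list n j)) (length (sub_list n j))"
  by (simp add: cmpd_def)

lemma sub_list_nth: "p < length (sub_list n j) \<Longrightarrow> sub_list n j ! p \<subseteq> {0..<n} \<and> card (sub_list n j ! p) = j"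
  using nth_mem[of p "sub_list n j"] unfolding sub_list_set by auto

lemma cmpd_index: "A \<in> carrier_mat n n \<Longrightarrow> p < length (sub_list n j) \<Longrightarrow> q < length (sub_list n j) \<Longrightarrow>
  cmpd A j $$ (p,q) = det (sub A j (sub_list n j ! p) (sub_list n j ! q))"
  by (simp add: cmpd_def)

lemma pick_bound: "I \<subseteq> {0..<n} \<Longrightarrow> card I = j \<Longrightarrow> r < j \<Longrightarrow> pick I r < n"
  using pick_in[of I r] finite_subset[of I "{0..<n}"] by auto

lemma sum_sub_list: "(\<Sum>t<length (sub_list n j). g (sub_list n j ! t)) = (\<Sum>L \<in> {L. L \<subseteq> {0..<n} \<and> card L = j}. g L)"
proof -
  let ?es = "sub_list n j"
  have "(\<Sum>L \<in> {L. L \<subseteq> {0..<n} \<and> card L = j}. g L) = (\<Sum>L \<in> set ?es. g L)" unfolding sub_list_set ..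
  also have "set ?es = nth ?es ` {..<length ?es}" by (auto simp: set_conv_nth)
  also have "sum g \<dots> = (\<Sum>t<length ?es. g (?es ! t))"
    by (subst sum.reindex, rule inj_on_nth[OF sub_list_distinct], auto)
  finally show ?thesis ..
qed

lemma cmpd_mult: fixes A B :: "'a :: comm_ring_1 mat"
  assumes A: "A \<in> carrier_mat n n" and B: "B \<in> carrier_mat n n"
  shows "cmpd (A * B) j = cmpd A j * cmpd B j"
proof -
  let ?es = "sub_list n j"
  let ?N = "length ?es"
  have AB: "A * B \<in> carrier_mat n n" using A B by auto
  show ?thesis
  proof (rule eq_matI)
    show "dim_row (cmpd (A * B) j) = dim_row (cmpd A j * cmpd B j)" using A B AB by (simp add: cmpd_def)
    show "dim_col (cmpd (A * B) j) = dim_col (cmpd A j * cmpd B j)" using A B AB by (simp add: cmpd_def)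
    fix p q assume "p < dim_row (cmpd A j * cmpd B j)" "q < dim_col (cmpd A j * cmpd B j)"
    hence p: "p < ?N" and q: "q < ?N" using A B by (auto simp: cmpd_def)
    define I where "I = ?es ! p"
    define K where "K = ?es ! q"
    have I: "I \<subseteq> {0..<n}" "card I = j" using sub_list_nth[OF p] I_def by auto
    have K: "K \<subseteq> {0..<n}" "card K = j" using sub_list_nth[OF q] K_def by auto
    define X where "X = mat j n (\<lambda>(r,k). A $$ (pick I r, k))"
    define Y where "Y = mat n j (\<lambda>(k,c). B $$ (k, pick K c))"
    have X: "X \<in> carrier_mat j n" and Y: "Y \<in> carrier_mat n j" unfolding X_def Y_def by auto
    have "sub (A * B) j I K = X * Y"
      by (rule eq_matI, insert A B X Y pick_bound[OF I] pick_bound[OF K],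
        auto simp: sub_def X_def Y_def scalar_prod_def)
    hence "cmpd (A * B) j $$ (p,q) = det (X * Y)" using cmpd_index[OF AB p q] I_def K_def by simp
    also have "\<dots> = (\<Sum>L \<in> {L. L \<subseteq> {0..<n} \<and> card L = j}. det (csel X j L) * det (rsel Y j L))"
      by (rule cauchy_binet[OF X Y])
    also have "\<dots> = (\<Sum>L \<in> {L. L \<subseteq> {0..<n} \<and> card L = j}. det (sub A j I L) * det (sub B j L K))"
    proof (rule sum.cong[OF refl])
      fix L assume "L \<in> {L. L \<subseteq> {0..<n} \<and> card L = j}"
      hence L: "L \<subseteq> {0..<n}" "card L = j" by auto
      have "csel X j L = sub A j I L"
        by (rule eq_matI, insert pick_bound[OF L] pick_bound[OF I], auto simp: csel_def sub_def X_def)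
      moreover have "rsel Y j L = sub B j L K"
        by (rule eq_matI, insert pick_bound[OF L] pick_bound[OF K], auto simp: rsel_def sub_def Y_def)
      ultimately show "det (csel X j L) * det (rsel Y j L) = det (sub A j I L) * det (sub B j L K)" by simp
    qed
    also have "\<dots> = (\<Sum>t<?N. det (sub A j I (?es ! t)) * det (sub B j (?es ! t) K))"
      by (rule sum_sub_list[symmetric])
    also have "\<dots> = (cmpd A j * cmpd B j) $$ (p,q)"
      using p q A B unfolding I_def K_def
      by (auto simp: cmpd_def scalar_prod_def atLeast0LessThan intro!: sum.cong)
    finally show "cmpd (A * B) j $$ (p,q) = (cmpd A j * cmpd B j) $$ (p,q)" .
  qed
qed




lemma det_weight_triangular:
  fixes M :: "'a :: comm_ring_1 mat" and w :: "nat \<Rightarrow> nat"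
  assumes M: "M \<in> carrier_mat N N"
  and tri: "\<And>p q. p < N \<Longrightarrow> q < N \<Longrightarrow> p \<noteq> q \<Longrightarrow> M $$ (p,q) \<noteq> 0 \<Longrightarrow> w p < w q"
  shows "det M = (\<Prod>p=0..<N. M $$ (p,p))"
proof -
  let ?P = "{p. p permutes {0..<N}}"
  let ?g = "\<lambda>\<sigma>. signof \<sigma> * (\<Prod>i=0..<N. M $$ (i, \<sigma> i))"
  have zero: "?g \<sigma> = 0" if s: "\<sigma> \<in> ?P - {id}" for \<sigma>
  proof -
    have perm: "\<sigma> permutes {0..<N}" and ne: "\<sigma> \<noteq> id" using s by auto
    let ?D = "{p \<in> {0..<N}. \<sigma> p \<noteq> p}"
    have "?D \<noteq> {}"
    proof
      assume "?D = {}"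
      hence "\<sigma> x = x" for x using permutes_not_in[OF perm, of x] by (cases "x < N", auto)
      with ne show False by auto
    qed
    have finD: "finite ?D" by auto
    have "Max (w ` ?D) \<in> w ` ?D" using Max_in[of "w ` ?D"] finD \<open>?D \<noteq> {}\<close> by auto
    then obtain p0 where p0: "p0 \<in> ?D" "w p0 = Max (w ` ?D)" by (metis (no_types, lifting) imageE)
    have sp0: "\<sigma> p0 < N" using p0 permutes_in_image[OF perm] by auto
    have "\<sigma> (\<sigma> p0) \<noteq> \<sigma> p0" using p0 permutes_inj[OF perm] unfolding inj_def by auto
    hence "\<sigma> p0 \<in> ?D" using sp0 by auto
    hence le: "w (\<sigma> p0) \<le> w p0" using p0 finD by simp
    have "M $$ (p0, \<sigma> p0) = 0"
    proof (rule ccontr)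
      assume "M $$ (p0, \<sigma> p0) \<noteq> 0"
      from tri[OF _ sp0 _ this] p0 have "w p0 < w (\<sigma> p0)" by auto
      with le show False by auto
    qed
    hence "(\<Prod>i=0..<N. M $$ (i, \<sigma> i)) = 0" using p0 by (intro prod_zero, auto)
    thus ?thesis by simp
  qed
  have "det M = sum ?g ?P" by (rule det_def'[OF M])
  also have "\<dots> = ?g id + sum ?g (?P - {id})"
    by (rule sum.remove, auto simp: permutes_id finite_permutations)
  also have "sum ?g (?P - {id}) = 0" using zero by (intro sum.neutral, auto)
  finally show ?thesis by simp
qed

lemma cmpd_one: "cmpd (1\<^sub>m n :: 'a :: comm_ring_1 mat) j = 1\<^sub>m (length (sub_list n j))"
proof (rule eq_matI)
  let ?es = "sub_list n j"
  show "dim_row (cmpd (1\<^sub>m n :: 'a mat) j) = dim_row (1\<^sub>m (length ?es))" by (simp add: cmpd_def)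
  show "dim_col (cmpd (1\<^sub>m n :: 'a mat) j) = dim_col (1\<^sub>m (length ?es))" by (simp add: cmpd_def)
  fix p q assume "p < dim_row (1\<^sub>m (length ?es))" "q < dim_col (1\<^sub>m (length ?es))"
  hence p: "p < length ?es" and q: "q < length ?es" by auto
  define I where "I = ?es ! p"
  define K where "K = ?es ! q"
  have I: "I \<subseteq> {0..<n}" "card I = j" using sub_list_nth[OF p] I_def by auto
  have K: "K \<subseteq> {0..<n}" "card K = j" using sub_list_nth[OF q] K_def by auto
  have finI: "finite I" and finK: "finite K" using I K finite_subset by auto
  have e: "cmpd (1\<^sub>m n :: 'a mat) j $$ (p,q) = det (sub (1\<^sub>m n) j I K)"
    unfolding I_def K_def by (rule cmpd_index[OF one_carrier_mat p q])
  show "cmpd (1\<^sub>m n :: 'a mat) j $$ (p,q) = 1\<^sub>m (length ?es) $$ (p,q)"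
  proof (cases "p = q")
    case True
    hence KI: "K = I" unfolding K_def I_def by simp
    have "sub (1\<^sub>m n :: 'a mat) j I K = 1\<^sub>m j" unfolding KI
      using pick_bound[OF I] pick_inj[OF finI] I
      by (intro eq_matI, auto simp: sub_def inj_on_def)
    thus ?thesis using e True p by simp
  next
    case False
    hence IK: "I \<noteq> K" using sub_list_distinct[of n j] p q unfolding I_def K_def by (simp add: nth_eq_iff_index_eq)
    have "\<not> I \<subseteq> K"
    proof
      assume "I \<subseteq> K"
      with card_subset_eq[OF finK this] I K IK show False by auto
    qed
    then obtain i where i: "i \<in> I" "i \<notin> K" by auto
    define r0 where "r0 = card {a \<in> I. a < i}"
    have r0: "r0 < j" "pick I r0 = i" using card_less_pick[OF finI i(1)] pick_card_in_set[OF i(1)] I unfolding r0_def by auto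
    have "det (sub (1\<^sub>m n :: 'a mat) j I K) = 0"
      unfolding det_def'[OF sub_carrier]
    proof (rule sum.neutral, intro ballI)
      fix \<sigma> assume \<sigma>: "\<sigma> \<in> {p. p permutes {0..<j}}"
      have s: "\<sigma> r0 < j" using \<sigma> r0(1) by (simp add: permutes_in_image)
      have pk: "pick K (\<sigma> r0) \<in> K" by (rule pick_in[OF finK], use s K in simp)
      have ne: "pick K (\<sigma> r0) \<noteq> i" using pk i(2) by blast
      have b1: "pick K (\<sigma> r0) < n" by (rule pick_bound[OF K s])
      have b2: "i < n" using I i by auto
      have "sub (1\<^sub>m n :: 'a mat) j I K $$ (r0, \<sigma> r0) = (1\<^sub>m n :: 'a mat) $$ (pick I r0, pick K (\<sigma> r0))"
        unfolding sub_def using r0(1) s by simp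
      also have "\<dots> = 0" using r0(2) ne b1 b2 by simp
      finally have "sub (1\<^sub>m n :: 'a mat) j I K $$ (r0, \<sigma> r0) = 0" .
      hence "(\<Prod>i=0..<j. sub (1\<^sub>m n :: 'a mat) j I K $$ (i, \<sigma> i)) = 0" using r0 by (intro prod_zero, auto)
      thus "signof \<sigma> * (\<Prod>i=0..<j. sub (1\<^sub>m n :: 'a mat) j I K $$ (i, \<sigma> i)) = 0" by simp
    qed
    moreover have "1\<^sub>m (length ?es) $$ (p,q) = (0::'a)" using p q False by simp
    ultimately show ?thesis unfolding e by simp
  qed
qed

lemma cmpd_similar: fixes A :: "'a :: comm_ring_1 mat"
  assumes "similar_mat_wit A B P Q"
  shows "similar_mat_wit (cmpd A j) (cmpd B j) (cmpd P j) (cmpd Q j)"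
proof -
  define n where "n = dim_row A"
  note w = similar_mat_witD[OF n_def assms]
  have c: "A \<in> carrier_mat n n" "B \<in> carrier_mat n n" "P \<in> carrier_mat n n" "Q \<in> carrier_mat n n"
    and PQ: "P * Q = 1\<^sub>m n" and QP: "Q * P = 1\<^sub>m n" and A: "A = P * B * Q" using w by auto
  let ?N = "length (sub_list n j)"
  have cc: "cmpd A j \<in> carrier_mat ?N ?N" "cmpd B j \<in> carrier_mat ?N ?N" "cmpd P j \<in> carrier_mat ?N ?N" "cmpd Q j \<in> carrier_mat ?N ?N"
    using c by (auto intro: cmpd_carrier)
  have PB: "P * B \<in> carrier_mat n n" using c by auto
  have "cmpd A j = cmpd (P * B) j * cmpd Q j" unfolding A by (rule cmpd_mult[OF PB c(4)])
  also have "cmpd (P * B) j = cmpd P j * cmpd B j" by (rule cmpd_mult[OF c(3) c(2)])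
  finally have 1: "cmpd A j = cmpd P j * cmpd B j * cmpd Q j" .
  have "cmpd P j * cmpd Q j = cmpd (P * Q) j" by (rule cmpd_mult[OF c(3) c(4), symmetric])
  also have "\<dots> = 1\<^sub>m ?N" unfolding PQ by (rule cmpd_one)
  finally have 2: "cmpd P j * cmpd Q j = 1\<^sub>m ?N" .
  have "cmpd Q j * cmpd P j = cmpd (Q * P) j" by (rule cmpd_mult[OF c(4) c(3), symmetric])
  also have "\<dots> = 1\<^sub>m ?N" unfolding QP by (rule cmpd_one)
  finally have 3: "cmpd Q j * cmpd P j = 1\<^sub>m ?N" .
  have dr: "dim_row (cmpd A j) = ?N" using cc by simp
  show ?thesis unfolding similar_mat_wit_def Let_def dr using cc 1 2 3 by auto
qed




lemma prod_sub_list: "(\<Prod>t<length (sub_list n j). g (sub_list n j ! t)) = (\<Prod>L \<in> {L. L \<subseteq> {0..<n} \<and> card L = j}. g L)"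
proof -
  let ?es = "sub_list n j"
  have "(\<Prod>L \<in> {L. L \<subseteq> {0..<n} \<and> card L = j}. g L) = (\<Prod>L \<in> set ?es. g L)" unfolding sub_list_set ..
  also have "set ?es = nth ?es ` {..<length ?es}" by (auto simp: set_conv_nth)
  also have "prod g \<dots> = (\<Prod>t<length ?es. g (?es ! t))"
    by (subst prod.reindex, rule inj_on_nth[OF sub_list_distinct], auto)
  finally show ?thesis ..
qed

lemma sub_ut_diag: fixes T :: "'a :: comm_ring_1 mat"
  assumes T: "T \<in> carrier_mat n n" and ut: "upper_triangular T" and I: "I \<subseteq> {0..<n}" "card I = j"
  shows "det (sub T j I I) = (\<Prod>i\<in>I. T $$ (i,i))"
proof -
  have finI: "finite I" using I finite_subset by blast
  have "upper_triangular (sub T j I I)"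
    unfolding upper_triangular_def
  proof (intro allI impI)
    fix r c assume r: "r < dim_row (sub T j I I)" and c: "c < r"
    hence rj: "r < j" by (simp add: sub_def)
    have "pick I c < pick I r" using pick_mono[of r I c] rj I c by auto
    moreover have "pick I r < n" by (rule pick_bound[OF I rj])
    ultimately have "T $$ (pick I r, pick I c) = 0" using ut T unfolding upper_triangular_def by auto
    thus "sub T j I I $$ (r, c) = 0" using rj c by (simp add: sub_def)
  qed
  hence "det (sub T j I I) = prod_list (diag_mat (sub T j I I))" by (rule det_upper_triangular[OF _ sub_carrier])
  also have "\<dots> = (\<Prod>r=0..<j. T $$ (pick I r, pick I r))" unfolding prod_list_diag_prod
    by (rule prod.cong, auto simp: sub_def)
  also have "\<dots> = (\<Prod>i\<in>pick I ` {0..<j}. T $$ (i,i))"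
    by (rule prod.reindex[symmetric, unfolded o_def], use pick_inj[OF finI] I in simp)
  also have "pick I ` {0..<j} = I" using pick_image[OF finI] I by simp
  finally show ?thesis .
qed

lemma pick_le_mono: "finite I \<Longrightarrow> a \<le> b \<Longrightarrow> b < card I \<Longrightarrow> pick I a \<le> pick I b"
  using pick_mono[of b I a] by (cases "a = b", auto)

lemma sub_ut_order: fixes T :: "'a :: comm_ring_1 mat"
  assumes T: "T \<in> carrier_mat n n" and ut: "upper_triangular T" and I: "I \<subseteq> {0..<n}" "card I = j"
   and K: "K \<subseteq> {0..<n}" "card K = j" and nz: "det (sub T j I K) \<noteq> 0" and r0: "r0 < j"
 shows "pick I r0 \<le> pick K r0"
proof (rule ccontr)
  assume "\<not> pick I r0 \<le> pick K r0"
  hence lt: "pick K r0 < pick I r0" by simp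
  have finI: "finite I" using I finite_subset by blast
  have finK: "finite K" using K finite_subset by blast
  have "det (sub T j I K) = 0" unfolding det_def'[OF sub_carrier]
  proof (rule sum.neutral, intro ballI)
    fix \<sigma> assume "\<sigma> \<in> {p. p permutes {0..<j}}"
    hence \<sigma>: "\<sigma> permutes {0..<j}" by simp
    have "\<exists>a. r0 \<le> a \<and> a < j \<and> \<sigma> a \<le> r0"
    proof (rule ccontr)
      assume "\<not> ?thesis"
      hence "\<sigma> ` {r0..<j} \<subseteq> {Suc r0..<j}" using permutes_in_image[OF \<sigma>] by fastforce
      moreover have "inj_on \<sigma> {r0..<j}" using permutes_inj_on[OF \<sigma>] .
      ultimately have "card {r0..<j} \<le> card {Suc r0..<j}" by (intro card_inj_on_le, auto)
      thus False using r0 by simp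
    qed
    then obtain a where a: "r0 \<le> a" "a < j" "\<sigma> a \<le> r0" by blast
    have "pick K (\<sigma> a) \<le> pick K r0" by (rule pick_le_mono[OF finK a(3)], use r0 K in simp)
    moreover have "pick I r0 \<le> pick I a" by (rule pick_le_mono[OF finI a(1)], use a I in simp)
    ultimately have lt2: "pick K (\<sigma> a) < pick I a" using lt by simp
    have sa: "\<sigma> a < j" using permutes_in_image[OF \<sigma>] a by simp
    have "pick I a < n" by (rule pick_bound[OF I a(2)])
    hence "T $$ (pick I a, pick K (\<sigma> a)) = 0" using lt2 ut T unfolding upper_triangular_def by auto
    hence "sub T j I K $$ (a, \<sigma> a) = 0" using a sa by (simp add: sub_def)
    hence "(\<Prod>i=0..<j. sub T j I K $$ (i, \<sigma> i)) = 0" using a by (intro prod_zero, auto)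
    thus "signof \<sigma> * (\<Prod>i=0..<j. sub T j I K $$ (i, \<sigma> i)) = 0" by simp
  qed
  with nz show False by simp
qed

lemma sum_pick: "finite I \<Longrightarrow> (\<Sum>r=0..<card I. pick I r) = \<Sum> I"
proof -
  assume finI: "finite I"
  have "(\<Sum>r=0..<card I. pick I r) = (\<Sum>i\<in>pick I ` {0..<card I}. i)"
    by (rule sum.reindex[symmetric, unfolded o_def], use pick_inj[OF finI] in simp)
  thus ?thesis using pick_image[OF finI] by simp
qed

lemma sub_ut_weight: fixes T :: "'a :: comm_ring_1 mat"
  assumes T: "T \<in> carrier_mat n n" and ut: "upper_triangular T" and I: "I \<subseteq> {0..<n}" "card I = j"
   and K: "K \<subseteq> {0..<n}" "card K = j" and nz: "det (sub T j I K) \<noteq> 0" and IK: "I \<noteq> K"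
 shows "\<Sum> I < \<Sum> K"
proof -
  have finI: "finite I" using I finite_subset by blast
  have finK: "finite K" using K finite_subset by blast
  have le: "\<forall>r\<in>{0..<j}. pick I r \<le> pick K r" using sub_ut_order[OF T ut I K nz] by auto
  have "\<exists>r\<in>{0..<j}. pick I r < pick K r"
  proof (rule ccontr)
    assume "\<not> ?thesis"
    hence "\<forall>r\<in>{0..<j}. pick I r = pick K r" using le by force
    hence "pick I ` {0..<j} = pick K ` {0..<j}" by (intro image_cong, auto)
    hence "I = K" using pick_image[OF finI] pick_image[OF finK] I K by simp
    with IK show False by simp
  qed
  hence "(\<Sum>r=0..<j. pick I r) < (\<Sum>r=0..<j. pick K r)" using le by (intro sum_strict_mono_ex1, auto)
  thus ?thesis using sum_pick[OF finI] sum_pick[OF finK] I K by simp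
qed

lemma char_poly_cmpd_ut: fixes T :: "'a :: comm_ring_1 mat"
  assumes T: "T \<in> carrier_mat n n" and ut: "upper_triangular T"
  shows "char_poly (cmpd T j) = (\<Prod>L \<in> {L. L \<subseteq> {0..<n} \<and> card L = j}. [:- (\<Prod>i\<in>L. T $$ (i,i)), 1:])"
proof -
  let ?es = "sub_list n j"
  let ?N = "length ?es"
  let ?C = "cmpd T j"
  have C: "?C \<in> carrier_mat ?N ?N" by (rule cmpd_carrier[OF T])
  have CP: "char_poly_matrix ?C \<in> carrier_mat ?N ?N" using C by simp
  have ent: "char_poly_matrix ?C $$ (p,q) = (if p = q then [:0,1:] else 0) + [:- ?C $$ (p,q):]"
    if "p < ?N" "q < ?N" for p q using that C unfolding char_poly_matrix_def by simp
  have "char_poly ?C = (\<Prod>p=0..<?N. char_poly_matrix ?C $$ (p,p))"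
    unfolding char_poly_def
  proof (rule det_weight_triangular[OF CP, where w = "\<lambda>t. \<Sum> (?es ! t)"])
    fix p q assume pq: "p < ?N" "q < ?N" "p \<noteq> q" and nz: "char_poly_matrix ?C $$ (p,q) \<noteq> 0"
    hence "?C $$ (p,q) \<noteq> 0" using ent[OF pq(1,2)] by auto
    hence "det (sub T j (?es ! p) (?es ! q)) \<noteq> 0" using cmpd_index[OF T pq(1,2)] by simp
    moreover have "?es ! p \<noteq> ?es ! q" using sub_list_distinct[of n j] pq by (simp add: nth_eq_iff_index_eq)
    ultimately show "\<Sum> (?es ! p) < \<Sum> (?es ! q)"
      using sub_ut_weight[OF T ut] sub_list_nth[OF pq(1)] sub_list_nth[OF pq(2)] by blast
  qed
  also have "\<dots> = (\<Prod>p<?N. [:- (\<Prod>i\<in>?es ! p. T $$ (i,i)), 1:])"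
  proof (rule prod.cong)
    fix p assume "p \<in> {..<?N}"
    hence p: "p < ?N" by simp
    have "?C $$ (p,p) = (\<Prod>i\<in>?es ! p. T $$ (i,i))"
      using cmpd_index[OF T p p] sub_ut_diag[OF T ut] sub_list_nth[OF p] by simp
    thus "char_poly_matrix ?C $$ (p,p) = [:- (\<Prod>i\<in>?es ! p. T $$ (i,i)), 1:]" using ent[OF p p] by simp
  qed (simp add: atLeast0LessThan)
  also have "\<dots> = (\<Prod>L \<in> {L. L \<subseteq> {0..<n} \<and> card L = j}. [:- (\<Prod>i\<in>L. T $$ (i,i)), 1:])"
    by (rule prod_sub_list)
  finally show ?thesis .
qed




lemma mv_sum: "A \<in> carrier_mat N N \<Longrightarrow> v \<in> carrier_vec N \<Longrightarrow> i < N \<Longrightarrow> (A *\<^sub>v v) $ i = (\<Sum>k<N. A $$ (i,k) * v $ k)"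
  by (auto simp: scalar_prod_def atLeast0LessThan intro!: sum.cong)

lemma pow_mat_Suc_left: "A \<in> carrier_mat n n \<Longrightarrow> A ^\<^sub>m (Suc k) = A * A ^\<^sub>m k"
proof (induct k)
  case 0 thus ?case by simp
next
  case (Suc k)
  have "A ^\<^sub>m Suc (Suc k) = (A * A ^\<^sub>m k) * A" using Suc by simp
  also have "\<dots> = A * (A ^\<^sub>m k * A)" using Suc(2) by (simp add: assoc_mult_mat[of _ n n _ n])
  finally show ?case by simp
qed

lemma sr_lt1_no_growth:
  fixes M :: "real mat"
  assumes M: "M \<in> carrier_mat N N" and nonneg: "\<And>i j. i < N \<Longrightarrow> j < N \<Longrightarrow> M $$ (i,j) \<ge> 0"
  and sr: "spectral_radius (map_mat complex_of_real M) < 1"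
  and u: "u \<in> carrier_vec N" and upos: "\<And>i. i < N \<Longrightarrow> u $ i > 0"
  and grow: "\<And>i. i < N \<Longrightarrow> (M *\<^sub>v u) $ i \<ge> d * u $ i" and d: "d > 1" and N: "N > 0"
  shows False
proof -
  have Mc: "map_mat complex_of_real M \<in> carrier_mat N N" using M by simp
  obtain b where b: "\<And>k. norm_bound ((map_mat complex_of_real M) ^\<^sub>m k) b"
    using spectral_radius_jnf_norm_bound_less_1_upper_triangular[OF Mc sr] by blast
  have ent: "\<bar>(M ^\<^sub>m k) $$ (i,l)\<bar> \<le> b" if "i < N" "l < N" for k i l
  proof -
    have "map_mat complex_of_real (M ^\<^sub>m k) = (map_mat complex_of_real M) ^\<^sub>m k"
      by (rule of_real_hom.mat_hom_pow[OF M])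
    hence "norm_bound (map_mat complex_of_real (M ^\<^sub>m k)) b" using b by simp
    hence "norm (map_mat complex_of_real (M ^\<^sub>m k) $$ (i,l)) \<le> b" using that M unfolding norm_bound_def by auto
    thus ?thesis using that M by simp
  qed
  have growk: "(M ^\<^sub>m k *\<^sub>v u) $ i \<ge> d ^ k * u $ i" if "i < N" for k i
    using that
  proof (induct k arbitrary: i)
    case 0 thus ?case using u M by simp
  next
    case (Suc k)
    have "d ^ Suc k * u $ i = d ^ k * (d * u $ i)" by simp
    also have "\<dots> \<le> d ^ k * (M *\<^sub>v u) $ i"
      by (rule mult_left_mono, use grow Suc d in auto)
    also have "d ^ k * (M *\<^sub>v u) $ i = (\<Sum>l<N. M $$ (i,l) * (d ^ k * u $ l))"
      unfolding mv_sum[OF M u Suc.prems] by (simp add: sum_distrib_left ac_simps)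
    also have "\<dots> \<le> (\<Sum>l<N. M $$ (i,l) * (M ^\<^sub>m k *\<^sub>v u) $ l)"
      by (rule sum_mono, rule mult_left_mono, use Suc nonneg in auto)
    also have "\<dots> = (M *\<^sub>v (M ^\<^sub>m k *\<^sub>v u)) $ i"
      by (rule mv_sum[OF M mult_mat_vec_carrier[OF pow_carrier_mat[OF M] u], symmetric], use Suc in auto)
    also have "\<dots> = (M ^\<^sub>m Suc k *\<^sub>v u) $ i"
      unfolding pow_mat_Suc_left[OF M] using M u by (simp add: assoc_mult_mat_vec[of _ N N _ N])
    finally show ?case .
  qed
  define S where "S = (\<Sum>l<N. u $ l)"
  have bnd: "d ^ k * u $ 0 \<le> b * S" for k
  proof -
    have "d ^ k * u $ 0 \<le> (M ^\<^sub>m k *\<^sub>v u) $ 0" using growk N by auto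
    also have "\<dots> = (\<Sum>l<N. (M ^\<^sub>m k) $$ (0,l) * u $ l)" by (rule mv_sum[OF _ u N], use M in simp)
    also have "\<dots> \<le> (\<Sum>l<N. b * u $ l)"
    proof (rule sum_mono)
      fix l assume "l \<in> {..<N}"
      hence l: "l < N" by simp
      have "(M ^\<^sub>m k) $$ (0,l) * u $ l \<le> \<bar>(M ^\<^sub>m k) $$ (0,l)\<bar> * u $ l"
        using upos[OF l] by (intro mult_right_mono, auto)
      also have "\<dots> \<le> b * u $ l" using ent[OF N l] upos[OF l] by (intro mult_right_mono, auto)
      finally show "(M ^\<^sub>m k) $$ (0,l) * u $ l \<le> b * u $ l" .
    qed
    also have "\<dots> = b * S" unfolding S_def by (simp add: sum_distrib_left)
    finally show ?thesis .
  qed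
  obtain k where "b * S / u $ 0 < d ^ k" using real_arch_pow[OF d] by blast
  hence "b * S < d ^ k * u $ 0" using upos[OF N] by (simp add: field_simps)
  with bnd[of k] show False by simp
qed

lemma tri_eq: fixes a :: "nat \<Rightarrow> complex"
  assumes fin: "finite A" and eq: "cmod (\<Sum>k\<in>A. a k) = (\<Sum>k\<in>A. cmod (a k))"
    and s: "s = (\<Sum>k\<in>A. a k)" and s0: "s \<noteq> 0" and k: "k \<in> A"
  shows "a k = complex_of_real (cmod (a k) / cmod s) * s"
proof -
  define t where "t = (\<lambda>k. Re (a k * cnj s))"
  have le: "t l \<le> cmod (a l) * cmod s" for l
    unfolding t_def using complex_Re_le_cmod[of "a l * cnj s"] by (simp add: norm_mult)
  have "(\<Sum>l\<in>A. t l) = Re (s * cnj s)" unfolding t_def s by (simp add: sum_distrib_right)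
  also have "\<dots> = cmod s * cmod s" by (simp add: complex_norm_square[symmetric] power2_eq_square)
  also have "\<dots> = (\<Sum>l\<in>A. cmod (a l) * cmod s)" using eq s by (simp add: sum_distrib_right)
  finally have "(\<Sum>l\<in>A. cmod (a l) * cmod s - t l) = 0" by (simp add: sum_subtractf)
  hence "\<forall>l\<in>A. cmod (a l) * cmod s - t l = 0" using le fin by (subst sum_nonneg_eq_0_iff[symmetric], auto)
  hence tk: "t k = cmod (a k) * cmod s" using k by auto
  define z where "z = a k * cnj s"
  have Rez: "Re z = cmod z" using tk unfolding t_def z_def by (simp add: norm_mult)
  have "Im z = 0"
  proof -
    have "cmod z ^ 2 = Re z ^ 2 + Im z ^ 2" by (rule cmod_power2)
    with Rez show ?thesis by simp
  qed
  hence zr: "z = complex_of_real (cmod (a k) * cmod s)" using Rez unfolding z_def by (simp add: complex_eq_iff norm_mult)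
  have "a k * (cnj s * s) = complex_of_real (cmod (a k) * cmod s) * s" using zr unfolding z_def by (simp add: ac_simps)
  moreover have cs: "cnj s * s = complex_of_real (cmod s ^ 2)" using complex_norm_square[of s] by (simp add: mult.commute)
  ultimately have "a k * complex_of_real (cmod s ^ 2) = complex_of_real (cmod (a k) * cmod s) * s"
    by simp
  thus ?thesis using s0 by (simp add: field_simps power2_eq_square)
qed

lemma mm_sum: "A \<in> carrier_mat n m \<Longrightarrow> B \<in> carrier_mat m p \<Longrightarrow> i < n \<Longrightarrow> j < p \<Longrightarrow>
  (A * B) $$ (i,j) = (\<Sum>k<m. A $$ (i,k) * B $$ (k,j))"
  by (auto simp: scalar_prod_def atLeast0LessThan intro!: sum.cong)

locale pos_mat =
  fixes M :: "real mat" and N :: nat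
  assumes M: "M \<in> carrier_mat N N" and N: "N > 0" and pos: "\<And>i j. i < N \<Longrightarrow> j < N \<Longrightarrow> M $$ (i,j) > 0"
begin

abbreviation "Mc \<equiv> map_mat complex_of_real M"
definition "rho = spectral_radius Mc"
definition absv :: "complex vec \<Rightarrow> real vec" where "absv v = vec N (\<lambda>i. cmod (v $ i))"

lemma Mc: "Mc \<in> carrier_mat N N" using M by simp

lemma absv_carrier[simp]: "absv v \<in> carrier_vec N" unfolding absv_def by simp
lemma absv_index[simp]: "i < N \<Longrightarrow> absv v $ i = cmod (v $ i)" unfolding absv_def by simp

lemma tri: assumes v: "v \<in> carrier_vec N" and i: "i < N"
  shows "cmod ((Mc *\<^sub>v v) $ i) \<le> (M *\<^sub>v absv v) $ i"
proof -
  have "(Mc *\<^sub>v v) $ i = (\<Sum>k<N. Mc $$ (i,k) * v $ k)" by (rule mv_sum[OF Mc v i])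
  also have "\<dots> = (\<Sum>k<N. complex_of_real (M $$ (i,k)) * v $ k)" using M i by (intro sum.cong, auto)
  finally have "cmod ((Mc *\<^sub>v v) $ i) \<le> (\<Sum>k<N. cmod (complex_of_real (M $$ (i,k)) * v $ k))"
    using norm_sum by metis
  also have "\<dots> = (\<Sum>k<N. M $$ (i,k) * absv v $ k)"
    by (rule sum.cong, use pos i in \<open>auto simp: norm_mult abs_of_pos\<close>)
  also have "\<dots> = (M *\<^sub>v absv v) $ i" by (rule mv_sum[OF M absv_carrier i, symmetric])
  finally show ?thesis .
qed

lemma pos_mult: assumes z: "z \<in> carrier_vec N" and nn: "\<And>k. k < N \<Longrightarrow> z $ k \<ge> 0" and k: "k < N" "z $ k \<noteq> 0"
  and i: "i < N" shows "(M *\<^sub>v z) $ i > 0"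
proof -
  have "(M *\<^sub>v z) $ i = (\<Sum>l<N. M $$ (i,l) * z $ l)" by (rule mv_sum[OF M z i])
  also have "\<dots> > 0"
  proof (rule sum_pos2[of _ k])
    show "0 < M $$ (i, k) * z $ k" using pos[OF i k(1)] nn[OF k(1)] k(2) by simp
    show "\<And>l. l \<in> {..<N} \<Longrightarrow> 0 \<le> M $$ (i, l) * z $ l" using pos i nn by (simp add: less_imp_le)
  qed (use k in auto)
  finally show ?thesis .
qed

lemma eigen_le_rho: "eigenvalue Mc \<mu> \<Longrightarrow> cmod \<mu> \<le> rho"
  using spectral_radius_mem_max(2)[OF Mc N] unfolding rho_def spectrum_def by auto

lemma rho_ex: "\<exists>\<mu>. eigenvalue Mc \<mu> \<and> cmod \<mu> = rho"
  using spectral_radius_mem_max(1)[OF Mc N] unfolding rho_def spectrum_def by auto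

lemma rho_nonneg: "rho \<ge> 0" using rho_ex norm_ge_zero by metis

lemma growth_bound: assumes u: "u \<in> carrier_vec N" and upos: "\<And>i. i < N \<Longrightarrow> u $ i > 0"
  and g: "\<And>i. i < N \<Longrightarrow> (M *\<^sub>v u) $ i \<ge> c * u $ i"
  shows "c \<le> rho"
proof (rule ccontr)
  assume "\<not> c \<le> rho"
  hence c: "c > rho" by simp
  define c' where "c' = (rho + c) / 2"
  have c': "c' > 0" "rho < c'" "c' < c" using c rho_nonneg unfolding c'_def by auto
  define M2 where "M2 = (1 / c') \<cdot>\<^sub>m M"
  have M2: "M2 \<in> carrier_mat N N" using M unfolding M2_def by simp
  have M2c: "map_mat complex_of_real M2 \<in> carrier_mat N N" using M2 by simp
  have sr: "spectral_radius (map_mat complex_of_real M2) < 1"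
  proof -
    obtain \<mu> where mu: "eigenvalue (map_mat complex_of_real M2) \<mu>" "cmod \<mu> = spectral_radius (map_mat complex_of_real M2)"
      using spectral_radius_mem_max(1)[OF M2c N] unfolding spectrum_def by auto
    then obtain v where v: "v \<in> carrier_vec N" "v \<noteq> 0\<^sub>v N" "map_mat complex_of_real M2 *\<^sub>v v = \<mu> \<cdot>\<^sub>v v"
      unfolding eigenvalue_def eigenvector_def using M2 by auto
    have "Mc *\<^sub>v v = (complex_of_real c' * \<mu>) \<cdot>\<^sub>v v"
    proof (rule eq_vecI)
      fix i assume "i < dim_vec ((complex_of_real c' * \<mu>) \<cdot>\<^sub>v v)"
      hence i: "i < N" using v by simp
      have "(map_mat complex_of_real M2 *\<^sub>v v) $ i = (\<Sum>k<N. map_mat complex_of_real M2 $$ (i,k) * v $ k)"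
        by (rule mv_sum[OF M2c v(1) i])
      also have "\<dots> = complex_of_real (1/c') * (\<Sum>k<N. Mc $$ (i,k) * v $ k)"
        unfolding sum_distrib_left by (rule sum.cong, use M i in \<open>auto simp: M2_def\<close>)
      also have "(\<Sum>k<N. Mc $$ (i,k) * v $ k) = (Mc *\<^sub>v v) $ i" by (rule mv_sum[OF Mc v(1) i, symmetric])
      finally have "(Mc *\<^sub>v v) $ i = complex_of_real c' * (\<mu> * v $ i)" using v(3) i v(1) c'
        by (auto simp: field_simps)
      thus "(Mc *\<^sub>v v) $ i = ((complex_of_real c' * \<mu>) \<cdot>\<^sub>v v) $ i" using i v by simp
    qed (use v M in auto)
    hence "eigenvalue Mc (complex_of_real c' * \<mu>)" unfolding eigenvalue_def eigenvector_def using v M by auto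
    hence "cmod (complex_of_real c' * \<mu>) \<le> rho" by (rule eigen_le_rho)
    hence "c' * cmod \<mu> \<le> rho" using c' by (simp add: norm_mult)
    hence "cmod \<mu> < 1" using c' by (smt (verit) mult_less_cancel_left2 mult_nonneg_nonneg norm_ge_zero)
    thus ?thesis using mu by simp
  qed
  show False
  proof (rule sr_lt1_no_growth[OF M2 _ sr u upos _ _ N])
    show "\<And>i j. i < N \<Longrightarrow> j < N \<Longrightarrow> M2 $$ (i,j) \<ge> 0" using pos c' M unfolding M2_def by (auto simp: less_imp_le)
    show "c / c' > 1" using c' by simp
    fix i assume i: "i < N"
    have "(M2 *\<^sub>v u) $ i = (\<Sum>k<N. M2 $$ (i,k) * u $ k)" by (rule mv_sum[OF M2 u i])
    also have "\<dots> = (1/c') * (\<Sum>k<N. M $$ (i,k) * u $ k)"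
      unfolding sum_distrib_left by (rule sum.cong, use M i in \<open>auto simp: M2_def\<close>)
    also have "(\<Sum>k<N. M $$ (i,k) * u $ k) = (M *\<^sub>v u) $ i" by (rule mv_sum[OF M u i, symmetric])
    finally have "(M2 *\<^sub>v u) $ i = (M *\<^sub>v u) $ i / c'" by simp
    moreover have "(M *\<^sub>v u) $ i / c' \<ge> c * u $ i / c'" using g[OF i] c' by (simp add: divide_right_mono)
    ultimately show "(M2 *\<^sub>v u) $ i \<ge> c / c' * u $ i" by simp
  qed
qed

lemma pushup: assumes z: "z \<in> carrier_vec N" and nn: "\<And>k. k < N \<Longrightarrow> z $ k \<ge> 0"
  and nz: "k0 < N" "z $ k0 \<noteq> 0" and ge: "\<And>i. i < N \<Longrightarrow> (M *\<^sub>v z) $ i \<ge> rho * z $ i"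
  shows "\<And>i. i < N \<Longrightarrow> (M *\<^sub>v z) $ i = rho * z $ i"
proof (rule ccontr)
  fix i0 assume i0: "i0 < N" "(M *\<^sub>v z) $ i0 \<noteq> rho * z $ i0"
  define u where "u = M *\<^sub>v z"
  define w where "w = vec N (\<lambda>i. u $ i - rho * z $ i)"
  have u: "u \<in> carrier_vec N" using M z unfolding u_def by simp
  have upos: "u $ i > 0" if "i < N" for i unfolding u_def by (rule pos_mult[OF z nn nz that])
  have w: "w \<in> carrier_vec N" unfolding w_def by simp
  have wnn: "w $ k \<ge> 0" if "k < N" for k using ge[OF that] that unfolding w_def u_def by simp
  have wi0: "w $ i0 \<noteq> 0" using i0 ge[OF i0(1)] unfolding w_def u_def by simp
  have Mwpos: "(M *\<^sub>v w) $ i > 0" if "i < N" for i by (rule pos_mult[OF w wnn i0(1) wi0 that])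
  have Mw: "(M *\<^sub>v w) $ i = (M *\<^sub>v u) $ i - rho * u $ i" if i: "i < N" for i
  proof -
    have "(M *\<^sub>v w) $ i = (\<Sum>k<N. M $$ (i,k) * w $ k)" by (rule mv_sum[OF M w i])
    also have "\<dots> = (\<Sum>k<N. M $$ (i,k) * u $ k) - rho * (\<Sum>k<N. M $$ (i,k) * z $ k)"
      unfolding sum_distrib_left sum_subtractf[symmetric] by (rule sum.cong, auto simp: w_def algebra_simps)
    also have "(\<Sum>k<N. M $$ (i,k) * u $ k) = (M *\<^sub>v u) $ i" by (rule mv_sum[OF M u i, symmetric])
    also have "(\<Sum>k<N. M $$ (i,k) * z $ k) = u $ i" unfolding u_def by (rule mv_sum[OF M z i, symmetric])
    finally show ?thesis .
  qed
  define E where "E = (\<lambda>i. (M *\<^sub>v w) $ i / u $ i) ` {..<N}"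
  define eps where "eps = Min E"
  have finE: "finite E" and neE: "E \<noteq> {}" using N unfolding E_def by auto
  have eps: "eps > 0" unfolding eps_def using finE neE Mwpos upos unfolding E_def by auto
  have "rho + eps \<le> rho"
  proof (rule growth_bound[OF u upos])
    fix i assume i: "i < N"
    have "eps \<le> (M *\<^sub>v w) $ i / u $ i" unfolding eps_def E_def using i finE by (intro Min_le, auto simp: E_def)
    hence "eps * u $ i \<le> (M *\<^sub>v w) $ i" using upos[OF i] by (simp add: pos_le_divide_eq)
    thus "(rho + eps) * u $ i \<le> (M *\<^sub>v u) $ i" using Mw[OF i] by (simp add: algebra_simps)
  qed
  with eps show False by simp
qed

lemma perron_vec: "rho > 0 \<and> (\<exists>z. z \<in> carrier_vec N \<and> (\<forall>i<N. z $ i > 0) \<and> (\<forall>i<N. (M *\<^sub>v z) $ i = rho * z $ i))"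
proof -
  obtain \<mu> where mu: "eigenvalue Mc \<mu>" "cmod \<mu> = rho" using rho_ex by auto
  then obtain v where v: "v \<in> carrier_vec N" "v \<noteq> 0\<^sub>v N" "Mc *\<^sub>v v = \<mu> \<cdot>\<^sub>v v"
    unfolding eigenvalue_def eigenvector_def using M by auto
  obtain k0 where k0: "k0 < N" "v $ k0 \<noteq> 0" using v(1,2) by (metis eq_vecI index_zero_vec(1,2) carrier_vecD)
  define z where "z = absv v"
  have z: "z \<in> carrier_vec N" unfolding z_def by simp
  have nn: "\<And>k. k < N \<Longrightarrow> z $ k \<ge> 0" unfolding z_def by simp
  have zk0: "z $ k0 \<noteq> 0" using k0 unfolding z_def by simp
  have ge: "(M *\<^sub>v z) $ i \<ge> rho * z $ i" if i: "i < N" for i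
  proof -
    have "rho * z $ i = cmod ((Mc *\<^sub>v v) $ i)" using v i mu unfolding z_def by (simp add: norm_mult)
    also have "\<dots> \<le> (M *\<^sub>v z) $ i" unfolding z_def by (rule tri[OF v(1) i])
    finally show ?thesis .
  qed
  have eq: "(M *\<^sub>v z) $ i = rho * z $ i" if "i < N" for i by (rule pushup[OF z nn k0(1) zk0 ge that])
  have pz: "(M *\<^sub>v z) $ i > 0" if "i < N" for i by (rule pos_mult[OF z nn k0(1) zk0 that])
  have rpos: "rho > 0" using pz[OF k0(1)] eq[OF k0(1)] nn[OF k0(1)] rho_nonneg
    by (metis less_eq_real_def mult_zero_left)
  have "\<forall>i<N. z $ i > 0" using pz eq rpos nn by (metis less_eq_real_def mult_zero_right)
  thus ?thesis using rpos z eq by auto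
qed

lemma absv_eigen: assumes v: "v \<in> carrier_vec N" "v \<noteq> 0\<^sub>v N" "Mc *\<^sub>v v = \<mu> \<cdot>\<^sub>v v" and mu: "cmod \<mu> = rho"
  shows "\<And>i. i < N \<Longrightarrow> (M *\<^sub>v absv v) $ i = rho * cmod (v $ i) \<and> cmod (v $ i) > 0"
proof -
  obtain k0 where k0: "k0 < N" "v $ k0 \<noteq> 0" using v(1,2) by (metis eq_vecI index_zero_vec(1,2) carrier_vecD)
  define z where "z = absv v"
  have z: "z \<in> carrier_vec N" unfolding z_def by simp
  have nn: "\<And>k. k < N \<Longrightarrow> z $ k \<ge> 0" unfolding z_def by simp
  have zk0: "z $ k0 \<noteq> 0" using k0 unfolding z_def by simp
  have ge: "(M *\<^sub>v z) $ i \<ge> rho * z $ i" if i: "i < N" for i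
  proof -
    have "rho * z $ i = cmod ((Mc *\<^sub>v v) $ i)" using v i mu unfolding z_def by (simp add: norm_mult)
    also have "\<dots> \<le> (M *\<^sub>v z) $ i" unfolding z_def by (rule tri[OF v(1) i])
    finally show ?thesis .
  qed
  have eq: "(M *\<^sub>v z) $ i = rho * z $ i" if "i < N" for i by (rule pushup[OF z nn k0(1) zk0 ge that])
  have pz: "(M *\<^sub>v z) $ i > 0" if "i < N" for i by (rule pos_mult[OF z nn k0(1) zk0 that])
  have rpos: "rho > 0" using perron_vec by simp
  fix i assume i: "i < N"
  have "z $ i > 0" using pz[OF i] eq[OF i] rpos nn[OF i] by (metis less_eq_real_def mult_zero_right)
  thus "(M *\<^sub>v absv v) $ i = rho * cmod (v $ i) \<and> cmod (v $ i) > 0" using eq[OF i] i unfolding z_def by simp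
qed

lemma dominant: assumes ev: "eigenvalue Mc \<mu>" and mu: "cmod \<mu> = rho" shows "\<mu> = complex_of_real rho"
proof -
  obtain v where v: "v \<in> carrier_vec N" "v \<noteq> 0\<^sub>v N" "Mc *\<^sub>v v = \<mu> \<cdot>\<^sub>v v"
    using ev unfolding eigenvalue_def eigenvector_def using M by auto
  note ae = absv_eigen[OF v mu]
  have rpos: "rho > 0" using perron_vec by simp
  define s where "s = (\<Sum>k<N. complex_of_real (M $$ (0,k)) * v $ k)"
  have s_eq: "s = \<mu> * v $ 0"
  proof -
    have "s = (Mc *\<^sub>v v) $ 0" unfolding s_def mv_sum[OF Mc v(1) N] using M N by (intro sum.cong, auto)
    thus ?thesis using v N by simp
  qed
  have cs: "cmod s = rho * cmod (v $ 0)" unfolding s_eq mu[symmetric] by (simp add: norm_mult)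
  have s0: "s \<noteq> 0" using cs rpos ae[OF N] by auto
  have "cmod s = (M *\<^sub>v absv v) $ 0" using cs ae[OF N] by simp
  also have "\<dots> = (\<Sum>k<N. M $$ (0,k) * absv v $ k)" by (rule mv_sum[OF M absv_carrier N])
  also have "\<dots> = (\<Sum>k<N. cmod (complex_of_real (M $$ (0,k)) * v $ k))"
    by (rule sum.cong, use pos N in \<open>auto simp: norm_mult abs_of_pos\<close>)
  finally have teq: "cmod (\<Sum>k<N. complex_of_real (M $$ (0,k)) * v $ k) = (\<Sum>k<N. cmod (complex_of_real (M $$ (0,k)) * v $ k))"
    unfolding s_def .
  define \<omega> where "\<omega> = s / complex_of_real (cmod s)"
  have vk: "v $ k = complex_of_real (cmod (v $ k)) * \<omega>" if k: "k < N" for k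
  proof -
    have "complex_of_real (M $$ (0,k)) * v $ k = complex_of_real (cmod (complex_of_real (M $$ (0,k)) * v $ k) / cmod s) * s"
      by (rule tri_eq[OF _ teq s_def s0], use k in auto)
    also have "\<dots> = complex_of_real (M $$ (0,k)) * (complex_of_real (cmod (v $ k)) * \<omega>)"
      using pos[OF N k] s0 unfolding \<omega>_def by (simp add: norm_mult abs_of_pos field_simps)
    finally show ?thesis using pos[OF N k] by simp
  qed
  have "(Mc *\<^sub>v v) $ 0 = (\<Sum>k<N. Mc $$ (0,k) * v $ k)" by (rule mv_sum[OF Mc v(1) N])
  also have "\<dots> = \<omega> * complex_of_real (\<Sum>k<N. M $$ (0,k) * absv v $ k)"
    unfolding of_real_sum sum_distrib_left
  proof (rule sum.cong[OF refl])
    fix k assume "k \<in> {..<N}"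
    hence k: "k < N" by simp
    have "Mc $$ (0,k) * v $ k = complex_of_real (M $$ (0,k)) * v $ k" using M N k by simp
    also have "\<dots> = complex_of_real (M $$ (0,k)) * (complex_of_real (cmod (v $ k)) * \<omega>)"
      by (rule arg_cong[where f="\<lambda>x. complex_of_real (M $$ (0,k)) * x", OF vk[OF k]])
    also have "\<dots> = \<omega> * complex_of_real (M $$ (0,k) * absv v $ k)" using k by simp
    finally show "Mc $$ (0,k) * v $ k = \<omega> * complex_of_real (M $$ (0,k) * absv v $ k)" .
  qed
  also have "(\<Sum>k<N. M $$ (0,k) * absv v $ k) = (M *\<^sub>v absv v) $ 0" by (rule mv_sum[OF M absv_carrier N, symmetric])
  also have "\<dots> = rho * cmod (v $ 0)" using ae[OF N] by simp
  finally have "\<mu> * v $ 0 = complex_of_real rho * v $ 0" using v N vk[OF N] by (simp add: ac_simps)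
  moreover have "v $ 0 \<noteq> 0" using ae[OF N] by auto
  ultimately show ?thesis by simp
qed

lemma geometric: assumes z: "z \<in> carrier_vec N" "\<And>i. i < N \<Longrightarrow> z $ i > 0" "\<And>i. i < N \<Longrightarrow> (M *\<^sub>v z) $ i = rho * z $ i"
  and w: "w \<in> carrier_vec N" "\<And>i. i < N \<Longrightarrow> (Mc *\<^sub>v w) $ i = complex_of_real rho * w $ i"
  shows "\<And>i. i < N \<Longrightarrow> w $ i = (w $ 0 / complex_of_real (z $ 0)) * complex_of_real (z $ i)"
proof (rule ccontr)
  define c where "c = w $ 0 / complex_of_real (z $ 0)"
  define y where "y = vec N (\<lambda>i. w $ i - c * complex_of_real (z $ i))"
  fix k0 assume k0: "k0 < N" "w $ k0 \<noteq> (w $ 0 / complex_of_real (z $ 0)) * complex_of_real (z $ k0)"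
  have y: "y \<in> carrier_vec N" unfolding y_def by simp
  have yk0: "y $ k0 \<noteq> 0" using k0 unfolding y_def c_def by simp
  have y0: "y $ 0 = 0" using N z(2)[OF N] unfolding y_def c_def by simp
  have My: "(Mc *\<^sub>v y) $ i = complex_of_real rho * y $ i" if i: "i < N" for i
  proof -
    have "(Mc *\<^sub>v y) $ i = (\<Sum>k<N. Mc $$ (i,k) * y $ k)" by (rule mv_sum[OF Mc y i])
    also have "\<dots> = (\<Sum>k<N. Mc $$ (i,k) * w $ k) - c * complex_of_real (\<Sum>k<N. M $$ (i,k) * z $ k)"
      unfolding of_real_sum sum_distrib_left sum_subtractf[symmetric] by (rule sum.cong, use M i in \<open>auto simp: y_def algebra_simps\<close>)
    also have "(\<Sum>k<N. Mc $$ (i,k) * w $ k) = (Mc *\<^sub>v w) $ i" by (rule mv_sum[OF Mc w(1) i, symmetric])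
    also have "(\<Sum>k<N. M $$ (i,k) * z $ k) = (M *\<^sub>v z) $ i" by (rule mv_sum[OF M z(1) i, symmetric])
    finally show ?thesis using w(2)[OF i] z(3)[OF i] i unfolding y_def by (simp add: algebra_simps)
  qed
  define a where "a = absv y"
  have a: "a \<in> carrier_vec N" unfolding a_def by simp
  have ann: "\<And>k. k < N \<Longrightarrow> a $ k \<ge> 0" unfolding a_def by simp
  have ak0: "a $ k0 \<noteq> 0" using k0 yk0 unfolding a_def by simp
  have ge: "(M *\<^sub>v a) $ i \<ge> rho * a $ i" if i: "i < N" for i
  proof -
    have "rho * a $ i = cmod ((Mc *\<^sub>v y) $ i)" using My[OF i] rho_nonneg i unfolding a_def by (simp add: norm_mult)
    also have "\<dots> \<le> (M *\<^sub>v a) $ i" unfolding a_def by (rule tri[OF y i])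
    finally show ?thesis .
  qed
  have "(M *\<^sub>v a) $ 0 = rho * a $ 0" by (rule pushup[OF a ann k0(1) ak0 ge N])
  moreover have "(M *\<^sub>v a) $ 0 > 0" by (rule pos_mult[OF a ann k0(1) ak0 N])
  moreover have "a $ 0 = 0" using y0 N unfolding a_def by simp
  ultimately show False by simp
qed

lemma transposed: "pos_mat (transpose_mat M) N"
  by (unfold_locales, use M N pos in auto)

lemma rho_T: "pos_mat.rho (transpose_mat M) = rho"
proof -
  have "spectrum (map_mat complex_of_real (transpose_mat M)) = spectrum Mc"
  proof -
    have e: "map_mat complex_of_real (transpose_mat M) = transpose_mat Mc" by auto
    show ?thesis unfolding e spectrum_root_char_poly[OF Mc] 
      spectrum_root_char_poly[OF transpose_carrier_mat[THEN iffD2, OF Mc]] char_poly_transpose_mat[OF Mc] ..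
  qed
  thus ?thesis unfolding pos_mat.rho_def[OF transposed] rho_def spectral_radius_def by simp
qed

lemma left_perron: "\<exists>y. y \<in> carrier_vec N \<and> (\<forall>i<N. y $ i > 0) \<and> (\<forall>k<N. (\<Sum>i<N. M $$ (i,k) * y $ i) = rho * y $ k)"
proof -
  obtain y where y: "y \<in> carrier_vec N" "\<forall>i<N. y $ i > 0" "\<forall>i<N. (transpose_mat M *\<^sub>v y) $ i = rho * y $ i"
    using pos_mat.perron_vec[OF transposed] unfolding rho_T by blast
  have "(\<Sum>i<N. M $$ (i,k) * y $ i) = rho * y $ k" if k: "k < N" for k
  proof -
    have "(transpose_mat M *\<^sub>v y) $ k = (\<Sum>i<N. transpose_mat M $$ (k,i) * y $ i)"
      by (rule mv_sum[OF _ y(1) k], use M in simp)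
    also have "\<dots> = (\<Sum>i<N. M $$ (i,k) * y $ i)" by (rule sum.cong, use M k in auto)
    finally show ?thesis using y(3) k by simp
  qed
  thus ?thesis using y by blast
qed

lemma simple: fixes K :: nat and f :: "nat \<Rightarrow> complex"
  assumes cp: "char_poly Mc = (\<Prod>t<K. [:- f t, 1:])"
  and t: "t1 < K" "t2 < K" "t1 \<noteq> t2" "f t1 = complex_of_real rho" "f t2 = complex_of_real rho"
  shows False
proof -
  let ?r = "complex_of_real rho"
  define es where "es = ?r # ?r # map f (filter (\<lambda>t. t \<noteq> t1 \<and> t \<noteq> t2) [0..<K])"
  have "(\<Prod>t<K. [:- f t, 1:]) = (\<Prod>t\<in>insert t1 (insert t2 ({..<K} - {t1,t2})). [:- f t, 1:])"
    by (rule prod.cong, use t in auto)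
  also have "\<dots> = [:- f t1, 1:] * ([:- f t2, 1:] * (\<Prod>t\<in>{..<K} - {t1,t2}. [:- f t, 1:]))"
    using t by (simp add: prod.insert_remove)
  also have "(\<Prod>t\<in>{..<K} - {t1,t2}. [:- f t, 1:]) = prod_list (map (\<lambda>t. [:- f t, 1:]) (filter (\<lambda>t. t \<noteq> t1 \<and> t \<noteq> t2) [0..<K]))"
    by (subst prod.distinct_set_conv_list[symmetric], simp, rule prod.cong, auto)
  finally have cp2: "char_poly Mc = (\<Prod>a\<leftarrow>es. [:- a, 1:])" unfolding cp es_def using t by (simp add: o_def)
  obtain B P Q where sch: "schur_decomposition Mc es = (B,P,Q)" by (cases "schur_decomposition Mc es", auto)
  from schur_decomposition[OF Mc cp2 sch] have sim: "similar_mat_wit Mc B P Q" and ut: "upper_triangular B"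
    and dg: "diag_mat B = es" by auto
  note w = similar_mat_witD2[OF Mc sim]
  have Bc: "B \<in> carrier_mat N N" and Pc: "P \<in> carrier_mat N N" and Qc: "Q \<in> carrier_mat N N" using w by auto
  have lenN: "length es = N" using dg Bc unfolding diag_mat_def by auto
  hence N2: "N \<ge> 2" unfolding es_def by simp
  have B00: "B $$ (0,0) = ?r" and B11: "B $$ (1,1) = ?r"
    using dg Bc N2 unfolding diag_mat_def es_def by (auto simp: list_eq_iff_nth_eq)
  have Bl0: "l < N \<Longrightarrow> l > 0 \<Longrightarrow> B $$ (l,0) = 0" for l using ut Bc unfolding upper_triangular_def by auto
  have Bl1: "l < N \<Longrightarrow> l > 1 \<Longrightarrow> B $$ (l,1) = 0" for l using ut Bc unfolding upper_triangular_def by auto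
  have MP: "Mc * P = P * B"
  proof -
    have "Mc * P = P * B * Q * P" using w by simp
    also have "\<dots> = P * B * (Q * P)" using Bc Pc Qc by (simp add: assoc_mult_mat[of _ N N _ N _ N])
    also have "\<dots> = P * B" using w Bc Pc by simp
    finally show ?thesis .
  qed
  have QP: "Q * P = 1\<^sub>m N" using w by simp
  define x where "x = vec N (\<lambda>i. P $$ (i,0))"
  define v where "v = vec N (\<lambda>i. P $$ (i,1))"
  have xc: "x \<in> carrier_vec N" and vc: "v \<in> carrier_vec N" unfolding x_def v_def by auto
  have Mcol: "(Mc *\<^sub>v vec N (\<lambda>i. P $$ (i,c))) $ i = (\<Sum>l<N. P $$ (i,l) * B $$ (l,c))" if "i < N" "c < N" for i c
  proof -
    have "(Mc *\<^sub>v vec N (\<lambda>i. P $$ (i,c))) $ i = (\<Sum>k<N. Mc $$ (i,k) * P $$ (k,c))"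
      by (subst mv_sum[OF Mc _ that(1)]) (auto intro!: sum.cong)
    also have "\<dots> = (Mc * P) $$ (i,c)" by (rule mm_sum[OF Mc Pc that, symmetric])
    also have "\<dots> = (\<Sum>l<N. P $$ (i,l) * B $$ (l,c))" unfolding MP by (rule mm_sum[OF Pc Bc that])
    finally show ?thesis .
  qed
  have Mx: "(Mc *\<^sub>v x) $ i = ?r * x $ i" if i: "i < N" for i
  proof -
    have "(Mc *\<^sub>v x) $ i = (\<Sum>l<N. P $$ (i,l) * B $$ (l,0))" unfolding x_def by (rule Mcol[OF i], use N in simp)
    also have "\<dots> = (\<Sum>l\<in>{0}. P $$ (i,l) * B $$ (l,0))" by (rule sum.mono_neutral_right, use N Bl0 in auto)
    finally show ?thesis using B00 i unfolding x_def by simp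
  qed
  have Mv: "(Mc *\<^sub>v v) $ i = B $$ (0,1) * x $ i + ?r * v $ i" if i: "i < N" for i
  proof -
    have "(Mc *\<^sub>v v) $ i = (\<Sum>l<N. P $$ (i,l) * B $$ (l,1))" unfolding v_def by (rule Mcol[OF i], use N2 in simp)
    also have "\<dots> = (\<Sum>l\<in>{0,1}. P $$ (i,l) * B $$ (l,1))" by (rule sum.mono_neutral_right, use N2 Bl1 in auto)
    finally show ?thesis using B11 i unfolding x_def v_def by simp
  qed
  obtain z where z: "z \<in> carrier_vec N" "\<forall>i<N. z $ i > 0" "\<forall>i<N. (M *\<^sub>v z) $ i = rho * z $ i"
    using perron_vec by blast
  define cx where "cx = x $ 0 / complex_of_real (z $ 0)"
  have xz: "x $ i = cx * complex_of_real (z $ i)" if "i < N" for i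
    unfolding cx_def by (rule geometric[OF z(1) _ _ xc Mx that], use z in auto)
  have QP00: "(\<Sum>i<N. Q $$ (0,i) * P $$ (i,0)) = 1" using mm_sum[OF Qc Pc, of 0 0] QP N by simp
  have QP01: "(\<Sum>i<N. Q $$ (0,i) * P $$ (i,1)) = 0" using mm_sum[OF Qc Pc, of 0 1] QP N2 by simp
  have QP11: "(\<Sum>i<N. Q $$ (1,i) * P $$ (i,1)) = 1" using mm_sum[OF Qc Pc, of 1 1] QP N2 by simp
  define S where "S = (\<Sum>i<N. Q $$ (0,i) * complex_of_real (z $ i))"
  have "cx * S = 1" unfolding S_def sum_distrib_left using QP00 xz unfolding x_def
    by (simp add: ac_simps)
  hence cx0: "cx \<noteq> 0" and S0: "S \<noteq> 0" by auto
  have B01: "B $$ (0,1) = 0"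
  proof -
    obtain y where y: "y \<in> carrier_vec N" "\<forall>i<N. y $ i > 0" "\<forall>k<N. (\<Sum>i<N. M $$ (i,k) * y $ i) = rho * y $ k"
      using left_perron by blast
    have "(\<Sum>i<N. complex_of_real (y $ i) * (Mc *\<^sub>v v) $ i) = (\<Sum>i<N. \<Sum>k<N. complex_of_real (y $ i) * (Mc $$ (i,k) * v $ k))"
      by (rule sum.cong, simp, subst mv_sum[OF Mc vc], auto simp: sum_distrib_left)
    also have "\<dots> = (\<Sum>k<N. \<Sum>i<N. complex_of_real (y $ i) * (Mc $$ (i,k) * v $ k))" by (rule sum.swap)
    also have "\<dots> = (\<Sum>k<N. complex_of_real (\<Sum>i<N. M $$ (i,k) * y $ i) * v $ k)"
      unfolding of_real_sum sum_distrib_right by (rule sum.cong, simp, rule sum.cong, use M in auto)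
    also have "\<dots> = (\<Sum>k<N. ?r * complex_of_real (y $ k) * v $ k)" by (rule sum.cong, use y(3) in auto)
    finally have eq1: "(\<Sum>i<N. complex_of_real (y $ i) * (Mc *\<^sub>v v) $ i) = (\<Sum>k<N. ?r * complex_of_real (y $ k) * v $ k)" .
    have "(\<Sum>i<N. complex_of_real (y $ i) * (Mc *\<^sub>v v) $ i) = 
      B $$ (0,1) * (\<Sum>i<N. complex_of_real (y $ i) * x $ i) + (\<Sum>k<N. ?r * complex_of_real (y $ k) * v $ k)"
      unfolding sum_distrib_left sum.distrib[symmetric] by (rule sum.cong, simp, subst Mv, auto simp: algebra_simps)
    with eq1 have e0: "B $$ (0,1) * (\<Sum>i<N. complex_of_real (y $ i) * x $ i) = 0" by simp
    have e1: "(\<Sum>i<N. complex_of_real (y $ i) * x $ i) = cx * complex_of_real (\<Sum>i<N. y $ i * z $ i)"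
      unfolding of_real_sum sum_distrib_left by (rule sum.cong, use xz in auto)
    have "(\<Sum>i<N. y $ i * z $ i) > 0" using y(2) z(2) N by (intro sum_pos, auto)
    hence e2: "complex_of_real (\<Sum>i<N. y $ i * z $ i) \<noteq> 0" by (simp only: of_real_eq_0_iff)
    from e0 have "B $$ (0,1) * (cx * complex_of_real (\<Sum>i<N. y $ i * z $ i)) = 0" unfolding e1 .
    thus ?thesis using cx0 e2 by (simp only: mult_eq_0_iff) simp
  qed
  define cv where "cv = v $ 0 / complex_of_real (z $ 0)"
  have vz: "v $ i = cv * complex_of_real (z $ i)" if "i < N" for i
    unfolding cv_def by (rule geometric[OF z(1) _ _ vc _ that], use z Mv B01 in auto)
  have "cv * S = 0" unfolding S_def sum_distrib_left using QP01 vz unfolding v_def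
    by (simp add: ac_simps)
  hence cv0: "cv = 0" using S0 by simp
  have "(\<Sum>i<N. Q $$ (1,i) * P $$ (i,1)) = 0" using vz cv0 unfolding v_def by (intro sum.neutral, auto)
  with QP11 show False by simp
qed

lemma perron_final: fixes K :: nat and f :: "nat \<Rightarrow> complex"
  assumes cp: "char_poly Mc = (\<Prod>t<K. [:- f t, 1:])"
  shows "rho > 0 \<and> (\<exists>t0<K. f t0 = complex_of_real rho \<and> (\<forall>t<K. t \<noteq> t0 \<longrightarrow> cmod (f t) < rho))"
proof -
  obtain z where z: "z \<in> carrier_vec N" "\<forall>i<N. z $ i > 0" "\<forall>i<N. (M *\<^sub>v z) $ i = rho * z $ i"
    and rpos: "rho > 0" using perron_vec by blast
  define zc where "zc = map_vec complex_of_real z"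
  have zc: "zc \<in> carrier_vec N" using z unfolding zc_def by simp
  have "eigenvector Mc zc (complex_of_real rho)" unfolding eigenvector_def
  proof (intro conjI)
    show "zc \<in> carrier_vec (dim_row Mc)" using zc M by simp
    show "zc \<noteq> 0\<^sub>v (dim_row Mc)"
    proof
      assume "zc = 0\<^sub>v (dim_row Mc)"
      hence "zc $ 0 = 0" using M N by simp
      hence "z $ 0 = 0" using z(1) N unfolding zc_def by simp
      moreover have "z $ 0 > 0" using z(2) N by blast
      ultimately show False by simp
    qed
    show "Mc *\<^sub>v zc = complex_of_real rho \<cdot>\<^sub>v zc"
    proof (rule eq_vecI)
      fix i assume "i < dim_vec (complex_of_real rho \<cdot>\<^sub>v zc)"
      hence i: "i < N" using zc by simp
      have "(Mc *\<^sub>v zc) $ i = (\<Sum>k<N. Mc $$ (i,k) * zc $ k)" by (rule mv_sum[OF Mc zc i])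
      also have "\<dots> = complex_of_real (\<Sum>k<N. M $$ (i,k) * z $ k)" unfolding of_real_sum
        by (rule sum.cong, use M i z(1) in \<open>auto simp: zc_def\<close>)
      also have "(\<Sum>k<N. M $$ (i,k) * z $ k) = (M *\<^sub>v z) $ i" by (rule mv_sum[OF M z(1) i, symmetric])
      finally show "(Mc *\<^sub>v zc) $ i = (complex_of_real rho \<cdot>\<^sub>v zc) $ i" using z(3) i zc z(1) unfolding zc_def by simp
    qed (use zc M in auto)
  qed
  hence "eigenvalue Mc (complex_of_real rho)" unfolding eigenvalue_def by blast
  hence "poly (char_poly Mc) (complex_of_real rho) = 0" using eigenvalue_root_char_poly[OF Mc] by simp
  hence "(\<Prod>t<K. poly [:- f t, 1:] (complex_of_real rho)) = 0" unfolding cp poly_prod .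
  then obtain t0 where t0: "t0 < K" "f t0 = complex_of_real rho" by auto
  have "cmod (f t) < rho" if t: "t < K" "t \<noteq> t0" for t
  proof -
    have "poly (char_poly Mc) (f t) = 0" unfolding cp poly_prod using t by (intro prod_zero, auto)
    hence ev: "eigenvalue Mc (f t)" using eigenvalue_root_char_poly[OF Mc] by simp
    have "cmod (f t) \<le> rho" by (rule eigen_le_rho[OF ev])
    moreover have "cmod (f t) \<noteq> rho"
    proof
      assume "cmod (f t) = rho"
      hence "f t = complex_of_real rho" by (rule dominant[OF ev])
      thus False using simple[OF cp t(1) t0(1) t(2) _ t0(2)] by simp
    qed
    ultimately show ?thesis by simp
  qed
  thus ?thesis using rpos t0 by blast
qed

end

lemma sign_sym_perron: fixes C :: "real mat" and K :: nat and f :: "nat \<Rightarrow> complex"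
  assumes C: "C \<in> carrier_mat N N" and N: "N > 0"
  and sgn: "\<And>p q. p < N \<Longrightarrow> q < N \<Longrightarrow> ((p \<in> J) = (q \<in> J) \<longrightarrow> C $$ (p,q) > 0) \<and> ((p \<in> J) \<noteq> (q \<in> J) \<longrightarrow> C $$ (p,q) < 0)"
  and cp: "char_poly (map_mat complex_of_real C) = (\<Prod>t<K. [:- f t, 1:])"
  shows "\<exists>\<rho>>0. \<exists>t0<K. f t0 = complex_of_real \<rho> \<and> (\<forall>t<K. t \<noteq> t0 \<longrightarrow> cmod (f t) < \<rho>)"
proof -
  define s where "s = (\<lambda>p. if p \<in> J then 1 else -1 :: real)"
  have ss: "s p * s p = 1" for p unfolding s_def by auto
  define D where "D = mat N N (\<lambda>(p,q). if p = q then s p else 0)"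
  define C' where "C' = mat N N (\<lambda>(p,q). s p * s q * C $$ (p,q))"
  have Dc: "D \<in> carrier_mat N N" and C'c: "C' \<in> carrier_mat N N" unfolding D_def C'_def by auto
  have DA: "(D * A) $$ (p,q) = s p * A $$ (p,q)" if A: "A \<in> carrier_mat N N" and pq: "p < N" "q < N" for A p q
  proof -
    have "(D * A) $$ (p,q) = (\<Sum>k<N. D $$ (p,k) * A $$ (k,q))" by (rule mm_sum[OF Dc A pq])
    also have "\<dots> = (\<Sum>k\<in>{p}. D $$ (p,k) * A $$ (k,q))" by (rule sum.mono_neutral_right, use pq in \<open>auto simp: D_def\<close>)
    finally show ?thesis using pq by (simp add: D_def)
  qed
  have AD: "(A * D) $$ (p,q) = A $$ (p,q) * s q" if A: "A \<in> carrier_mat N N" and pq: "p < N" "q < N" for A p q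
  proof -
    have "(A * D) $$ (p,q) = (\<Sum>k<N. A $$ (p,k) * D $$ (k,q))" by (rule mm_sum[OF A Dc pq])
    also have "\<dots> = (\<Sum>k\<in>{q}. A $$ (p,k) * D $$ (k,q))" by (rule sum.mono_neutral_right, use pq in \<open>auto simp: D_def\<close>)
    finally show ?thesis using pq by (simp add: D_def)
  qed
  have DD: "D * D = 1\<^sub>m N"
  proof (rule eq_matI)
    fix p q assume "p < dim_row (1\<^sub>m N)" "q < dim_col (1\<^sub>m N)"
    hence pq: "p < N" "q < N" by auto
    show "(D * D) $$ (p,q) = 1\<^sub>m N $$ (p,q)" unfolding DA[OF Dc pq] using pq ss by (simp add: D_def)
  qed (use Dc in auto)
  have DCD: "C' = D * C * D"
  proof (rule eq_matI)
    fix p q assume "p < dim_row (D * C * D)" "q < dim_col (D * C * D)"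
    hence pq: "p < N" "q < N" using Dc by auto
    have DC: "D * C \<in> carrier_mat N N" using Dc C by simp
    show "C' $$ (p,q) = (D * C * D) $$ (p,q)" unfolding AD[OF DC pq] DA[OF C pq] using pq by (simp add: C'_def)
  qed (use Dc C'c in auto)
  have "similar_mat_wit C' C D D" unfolding similar_mat_wit_def Let_def using C Dc C'c DD DCD by auto
  hence "char_poly C' = char_poly C" by (intro char_poly_similar, auto simp: similar_mat_def)
  moreover have "char_poly (map_mat complex_of_real C) = map_poly complex_of_real (char_poly C)"
    by (rule of_real_hom.char_poly_hom[OF C])
  moreover have "char_poly (map_mat complex_of_real C') = map_poly complex_of_real (char_poly C')"
    by (rule of_real_hom.char_poly_hom[OF C'c])
  ultimately have "char_poly (map_mat complex_of_real C') = char_poly (map_mat complex_of_real C)" by simp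
  hence cp': "char_poly (map_mat complex_of_real C') = (\<Prod>t<K. [:- f t, 1:])" using cp by simp
  have "pos_mat C' N"
  proof
    show "C' \<in> carrier_mat N N" by (rule C'c)
    show "N > 0" by (rule N)
    fix i j assume ij: "i < N" "j < N"
    show "C' $$ (i,j) > 0" using sgn[OF ij] ij unfolding C'_def s_def by (auto simp: mult_neg_neg)
  qed
  from pos_mat.perron_final[OF this cp'] show ?thesis by blast
qed




lemma combi:
  fixes lam :: "nat \<Rightarrow> complex" and n :: nat and Top :: "nat \<Rightarrow> nat set" and rh :: "nat \<Rightarrow> real"
  assumes n: "n \<ge> 1"
  and Top: "\<And>j. j \<in> {1..n} \<Longrightarrow> Top j \<subseteq> {0..<n} \<and> card (Top j) = j \<and> rh j > 0 \<and> (\<Prod>i\<in>Top j. lam i) = complex_of_real (rh j)"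
  and dom: "\<And>j L. j \<in> {1..n} \<Longrightarrow> L \<subseteq> {0..<n} \<Longrightarrow> card L = j \<Longrightarrow> L \<noteq> Top j \<Longrightarrow> cmod (\<Prod>i\<in>L. lam i) < cmod (\<Prod>i\<in>Top j. lam i)"
  shows "\<exists>ev :: nat \<Rightarrow> real. (\<Prod>i<n. [:- lam i, 1:]) = (\<Prod>k<n. [:- complex_of_real (ev k), 1:]) \<and>
     (\<forall>k. Suc k < n \<longrightarrow> ev (Suc k) < ev k) \<and> (\<forall>k<n. ev k > 0) \<and> lam ` {..<n} = (\<lambda>k. complex_of_real (ev k)) ` {..<n}"
proof -
  have finT: "finite (Top j)" if "j \<in> {1..n}" for j using Top[OF that] finite_subset by blast
  have sep: "cmod (lam k) < cmod (lam i)" if j: "j \<in> {1..n}" and i: "i \<in> Top j" and k: "k < n" "k \<notin> Top j" for j i k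
  proof -
    let ?T = "Top j"
    let ?R = "?T - {i}"
    let ?L = "insert k ?R"
    have T: "?T \<subseteq> {0..<n}" "card ?T = j" using Top[OF j] by auto
    have L: "?L \<subseteq> {0..<n}" using T k by auto
    have finR: "finite ?R" using finT[OF j] by simp
    have cL: "card ?L = j" using k i T finR finT[OF j] j by (simp add: card_Diff_singleton)
    have LT: "?L \<noteq> ?T" using k by auto
    have "(\<Prod>l\<in>?L. lam l) = lam k * (\<Prod>l\<in>?R. lam l)" using finR k by simp
    moreover have "(\<Prod>l\<in>?T. lam l) = lam i * (\<Prod>l\<in>?R. lam l)" using finT[OF j] i by (simp add: prod.remove)
    ultimately have "cmod (lam k) * cmod (\<Prod>l\<in>?R. lam l) < cmod (lam i) * cmod (\<Prod>l\<in>?R. lam l)"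
      using dom[OF j L cL LT] by (simp add: norm_mult)
    thus ?thesis by (rule mult_right_less_imp_less, simp)
  qed
  define G where "G = (\<lambda>i. {l. l < n \<and> cmod (lam l) > cmod (lam i)})"
  define r where "r = (\<lambda>i. card (G i))"
  have finG: "finite (G i)" for i unfolding G_def by (rule finite_subset[of _ "{..<n}"], auto)
  have rlt: "r i < n" if "i < n" for i
  proof -
    have "G i \<subseteq> {0..<n}" unfolding G_def by auto
    moreover have "i \<notin> G i" unfolding G_def by simp
    ultimately have "G i \<subset> {0..<n}" using that by auto
    thus ?thesis unfolding r_def using psubset_card_mono[of "{0..<n}" "G i"] by auto
  qed
  have GT: "G i \<subseteq> Top j - {i}" if j: "j \<in> {1..n}" and i: "i \<in> Top j" for i j
  proof
    fix l assume l: "l \<in> G i"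
    hence "l < n" "cmod (lam l) > cmod (lam i)" unfolding G_def by auto
    thus "l \<in> Top j - {i}" using sep[OF j i] by force
  qed
  have distinct: "cmod (lam i) \<noteq> cmod (lam k)" if ik: "i < n" "k < n" "i \<noteq> k" for i k
  proof
    assume eq: "cmod (lam i) = cmod (lam k)"
    define j where "j = Suc (r i)"
    have j: "j \<in> {1..n}" using rlt[OF ik(1)] unfolding j_def by auto
    let ?T = "Top j"
    have cT: "card ?T = j" using Top[OF j] by simp
    show False
    proof (cases "i \<in> ?T")
      case True
      have kT: "k \<in> ?T"
      proof (rule ccontr)
        assume "k \<notin> ?T"
        from sep[OF j True ik(2) this] eq show False by simp
      qed
      have kG: "k \<notin> G i" "i \<notin> G i" using eq unfolding G_def by auto
      have "insert i (insert k (G i)) \<subseteq> ?T" using GT[OF j True] True kT by auto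
      hence "card (insert i (insert k (G i))) \<le> card ?T" using finT[OF j] by (intro card_mono, auto)
      moreover have "card (insert i (insert k (G i))) = r i + 2" using kG ik finG unfolding r_def by simp
      ultimately show False using cT unfolding j_def by simp
    next
      case False
      have "?T \<subseteq> G i"
      proof
        fix l assume l: "l \<in> ?T"
        hence "l < n" using Top[OF j] by auto
        thus "l \<in> G i" using sep[OF j l ik(1) False] unfolding G_def by auto
      qed
      hence "card ?T \<le> card (G i)" using finG by (intro card_mono, auto)
      thus False using cT unfolding j_def r_def by simp
    qed
  qed
  have r_mono: "r k < r i" if ik: "i < n" "k < n" and lt: "cmod (lam i) < cmod (lam k)" for i k
  proof -
    have "G k \<subset> G i"
    proof
      show "G k \<subseteq> G i" using lt unfolding G_def by auto
      show "G k \<noteq> G i" using lt ik unfolding G_def by auto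
    qed
    thus ?thesis unfolding r_def using psubset_card_mono[OF finG] by auto
  qed
  have r_inj: "inj_on r {0..<n}"
  proof (rule inj_onI)
    fix i k assume ik: "i \<in> {0..<n}" "k \<in> {0..<n}" "r i = r k"
    show "i = k"
    proof (rule ccontr)
      assume "i \<noteq> k"
      hence "cmod (lam i) \<noteq> cmod (lam k)" using distinct ik by auto
      hence "cmod (lam i) < cmod (lam k) \<or> cmod (lam k) < cmod (lam i)" by auto
      thus False using r_mono ik by fastforce
    qed
  qed
  have r_bij: "bij_betw r {0..<n} {0..<n}"
  proof (rule bij_betw_imageI[OF r_inj], rule card_subset_eq)
    show "r ` {0..<n} \<subseteq> {0..<n}" using rlt by auto
    show "card (r ` {0..<n}) = card {0..<n}" by (rule card_image[OF r_inj])
  qed auto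
  have TopR: "Top j = {l \<in> {0..<n}. r l < j}" if j: "j \<in> {1..n}" for j
  proof -
    have sub: "Top j \<subseteq> {l \<in> {0..<n}. r l < j}"
    proof
      fix i assume i: "i \<in> Top j"
      have "card (G i) \<le> card (Top j - {i})" using GT[OF j i] finT[OF j] by (intro card_mono, auto)
      also have "\<dots> < j" using Top[OF j] i finT[OF j] j by (simp add: card_Diff_singleton)
      finally show "i \<in> {l \<in> {0..<n}. r l < j}" using Top[OF j] i unfolding r_def by auto
    qed
    have "card {l \<in> {0..<n}. r l < j} = card {0..<j}"
    proof -
      have "{l \<in> {0..<n}. r l < j} = inv_into {0..<n} r ` {0..<j}"
      proof
        show "{l \<in> {0..<n}. r l < j} \<subseteq> inv_into {0..<n} r ` {0..<j}"
        proof
          fix l assume l: "l \<in> {l \<in> {0..<n}. r l < j}"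
          hence "l = inv_into {0..<n} r (r l)" using r_inj by (simp add: inv_into_f_f)
          thus "l \<in> inv_into {0..<n} r ` {0..<j}" using l by auto
        qed
        show "inv_into {0..<n} r ` {0..<j} \<subseteq> {l \<in> {0..<n}. r l < j}"
        proof
          fix l assume "l \<in> inv_into {0..<n} r ` {0..<j}"
          then obtain m where m: "m < j" "l = inv_into {0..<n} r m" by auto
          have mn: "m \<in> {0..<n}" using m j by auto
          have mimg: "m \<in> r ` {0..<n}" using mn r_bij by (simp add: bij_betw_def)
          have "l \<in> {0..<n}" unfolding m(2) by (rule inv_into_into[OF mimg])
          moreover have "r l = m" unfolding m(2) by (rule f_inv_into_f[OF mimg])
          ultimately show "l \<in> {l \<in> {0..<n}. r l < j}" using m by auto
        qed
      qed
      also have "card \<dots> = card {0..<j}"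
      proof (rule card_image)
        show "inj_on (inv_into {0..<n} r) {0..<j}"
          using bij_betw_inv_into[OF r_bij] j unfolding bij_betw_def inj_on_def by auto
      qed
      finally show ?thesis .
    qed
    hence "card {l \<in> {0..<n}. r l < j} = card (Top j)" using Top[OF j] by simp
    thus ?thesis using sub by (intro card_subset_eq, auto)
  qed
  define R where "R = (\<lambda>j. {l \<in> {0..<n}. r l < j})"
  have piR: "\<exists>p>0. (\<Prod>l\<in>R j. lam l) = complex_of_real p" if "j \<le> n" for j
  proof (cases "j = 0")
    case True
    hence "R j = {}" unfolding R_def by auto
    thus ?thesis by auto
  next
    case False
    hence j: "j \<in> {1..n}" using that by auto
    thus ?thesis using Top[OF j] TopR[OF j] unfolding R_def by auto
  qed
  have lam_pos: "\<exists>p>0. lam i = complex_of_real p" if i: "i < n" for i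
  proof -
    define m where "m = r i"
    have m: "m < n" using rlt[OF i] unfolding m_def .
    have "R (Suc m) = insert i (R m)" unfolding R_def m_def using i inj_onD[OF r_inj] by (auto simp: less_Suc_eq)
    moreover have "i \<notin> R m" unfolding R_def m_def by auto
    moreover have "finite (R m)" unfolding R_def by auto
    ultimately have "(\<Prod>l\<in>R (Suc m). lam l) = lam i * (\<Prod>l\<in>R m. lam l)" by simp
    moreover obtain p1 where "p1 > 0" "(\<Prod>l\<in>R (Suc m). lam l) = complex_of_real p1" using piR[of "Suc m"] m by auto
    moreover obtain p0 where "p0 > 0" "(\<Prod>l\<in>R m. lam l) = complex_of_real p0" using piR[of m] m by auto
    ultimately have "lam i = complex_of_real (p1 / p0)" by (simp add: field_simps)
    moreover have "p1 / p0 > 0" using \<open>p1 > 0\<close> \<open>p0 > 0\<close> by simp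
    ultimately show ?thesis by blast
  qed
  define \<sigma> where "\<sigma> = inv_into {0..<n} r"
  have sig_bij: "bij_betw \<sigma> {0..<n} {0..<n}" unfolding \<sigma>_def by (rule bij_betw_inv_into[OF r_bij])
  have r_sig: "r (\<sigma> k) = k" if "k < n" for k using r_bij that unfolding \<sigma>_def bij_betw_def
    by (simp add: f_inv_into_f)
  define ev where "ev = (\<lambda>k. Re (lam (\<sigma> k)))"
  have sig_n: "\<sigma> k < n" if "k < n" for k using sig_bij that unfolding bij_betw_def by auto
  have lam_ev: "lam (\<sigma> k) = complex_of_real (ev k)" and ev_pos: "ev k > 0" if "k < n" for k
    using lam_pos[OF sig_n[OF that]] unfolding ev_def by auto
  have dec: "ev (Suc k) < ev k" if k: "Suc k < n" for k
  proof -
    have a: "\<sigma> k < n" "\<sigma> (Suc k) < n" using sig_n k by auto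
    have "\<sigma> k \<noteq> \<sigma> (Suc k)" using r_sig[of k] r_sig[of "Suc k"] k by auto
    hence ne: "cmod (lam (\<sigma> k)) \<noteq> cmod (lam (\<sigma> (Suc k)))" using distinct a by auto
    have "\<not> cmod (lam (\<sigma> k)) < cmod (lam (\<sigma> (Suc k)))"
    proof
      assume "cmod (lam (\<sigma> k)) < cmod (lam (\<sigma> (Suc k)))"
      from r_mono[OF a this] r_sig[of k] r_sig[of "Suc k"] k show False by simp
    qed
    hence "cmod (lam (\<sigma> (Suc k))) < cmod (lam (\<sigma> k))" using ne by simp
    thus ?thesis using lam_ev[of k] lam_ev[of "Suc k"] ev_pos[of k] ev_pos[of "Suc k"] k by simp
  qed
  have prod_eq: "(\<Prod>i<n. [:- lam i, 1:]) = (\<Prod>k<n. [:- complex_of_real (ev k), 1:])"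
  proof -
    have "(\<Prod>i<n. [:- lam i, 1:]) = (\<Prod>k<n. [:- lam (\<sigma> k), 1:])"
      using prod.reindex_bij_betw[OF sig_bij, of "\<lambda>i. [:- lam i, 1:]"] by (simp add: atLeast0LessThan)
    also have "\<dots> = (\<Prod>k<n. [:- complex_of_real (ev k), 1:])" by (rule prod.cong, use lam_ev in auto)
    finally show ?thesis .
  qed
  have img: "lam ` {..<n} = (\<lambda>k. complex_of_real (ev k)) ` {..<n}"
  proof -
    have "lam ` {..<n} = lam ` (\<sigma> ` {..<n})" using sig_bij unfolding bij_betw_def by (simp add: atLeast0LessThan)
    also have "\<dots> = (\<lambda>k. complex_of_real (ev k)) ` {..<n}" using lam_ev by (auto simp: image_image)
    finally show ?thesis .
  qed
  show ?thesis using prod_eq dec ev_pos img by blast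
qed




lemma cmpd_map: fixes A :: "real mat" assumes A: "A \<in> carrier_mat n n"
  shows "map_mat complex_of_real (cmpd A j) = cmpd (map_mat complex_of_real A) j"
proof -
  let ?es = "sub_list n j"
  have Ac: "map_mat complex_of_real A \<in> carrier_mat n n" using A by simp
  show ?thesis
  proof (rule eq_matI)
    fix p q assume "p < dim_row (cmpd (map_mat complex_of_real A) j)" "q < dim_col (cmpd (map_mat complex_of_real A) j)"
    hence p: "p < length ?es" and q: "q < length ?es" using Ac by (auto simp: cmpd_def)
    define I where "I = ?es ! p"
    define K where "K = ?es ! q"
    have I: "I \<subseteq> {0..<n}" "card I = j" using sub_list_nth[OF p] I_def by auto
    have K: "K \<subseteq> {0..<n}" "card K = j" using sub_list_nth[OF q] K_def by auto
    have "sub (map_mat complex_of_real A) j I K = map_mat complex_of_real (sub A j I K)"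
      by (rule eq_matI, use A pick_bound[OF I] pick_bound[OF K] in \<open>auto simp: sub_def\<close>)
    hence "det (sub (map_mat complex_of_real A) j I K) = complex_of_real (det (sub A j I K))" by simp
    thus "map_mat complex_of_real (cmpd A j) $$ (p,q) = cmpd (map_mat complex_of_real A) j $$ (p,q)"
      using cmpd_index[OF A p q] cmpd_index[OF Ac p q] p q A unfolding I_def K_def by (simp add: cmpd_def)
  qed (use A Ac in \<open>auto simp: cmpd_def\<close>)
qed

lemma char_poly_cmpd_c: fixes A :: "complex mat"
  assumes A: "A \<in> carrier_mat n n" and cp: "char_poly A = (\<Prod>a\<leftarrow>as. [:- a, 1:])"
  shows "char_poly (cmpd A j) = (\<Prod>t<length (sub_list n j). [:- (\<Prod>i\<in>sub_list n j ! t. as ! i), 1:])"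
proof -
  obtain B P Q where sch: "schur_decomposition A as = (B,P,Q)" by (cases "schur_decomposition A as", auto)
  from schur_decomposition[OF A cp sch] have sim: "similar_mat_wit A B P Q" and ut: "upper_triangular B"
    and dg: "diag_mat B = as" by auto
  have B: "B \<in> carrier_mat n n" using similar_mat_witD2[OF A sim] by auto
  have Bii: "B $$ (i,i) = as ! i" if "i < n" for i using dg B that unfolding diag_mat_def by auto
  have "similar_mat (cmpd A j) (cmpd B j)" using cmpd_similar[OF sim] unfolding similar_mat_def by blast
  hence "char_poly (cmpd A j) = char_poly (cmpd B j)" by (rule char_poly_similar)
  also have "\<dots> = (\<Prod>L \<in> {L. L \<subseteq> {0..<n} \<and> card L = j}. [:- (\<Prod>i\<in>L. B $$ (i,i)), 1:])"
    by (rule char_poly_cmpd_ut[OF B ut])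
  also have "\<dots> = (\<Prod>L \<in> {L. L \<subseteq> {0..<n} \<and> card L = j}. [:- (\<Prod>i\<in>L. as ! i), 1:])"
    by (rule prod.cong[OF refl], rule arg_cong[where f = "\<lambda>x. [:-x, 1:]"], rule prod.cong, use Bii in auto)
  also have "\<dots> = (\<Prod>t<length (sub_list n j). [:- (\<Prod>i\<in>sub_list n j ! t. as ! i), 1:])"
    by (rule prod_sub_list[symmetric])
  finally show ?thesis .
qed

lemma sign_cmpd: fixes A :: "real mat"
  assumes st: "STJS n A" and j: "j \<in> {1..n}"
  shows "\<exists>J. \<forall>p q. p < length (sub_list n j) \<longrightarrow> q < length (sub_list n j) \<longrightarrow>
     ((p \<in> J) = (q \<in> J) \<longrightarrow> cmpd A j $$ (p,q) > 0) \<and> ((p \<in> J) \<noteq> (q \<in> J) \<longrightarrow> cmpd A j $$ (p,q) < 0)"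
proof -
  let ?es = "sub_list n j"
  have A: "A \<in> carrier_mat n n" using st unfolding STJS_def by auto
  show ?thesis
  proof (cases "j = 1")
    case True
    obtain J where J: "\<forall>i\<in>{..<n}. \<forall>k\<in>{..<n}. ((i \<in> J) = (k \<in> J) \<longrightarrow> A $$ (i,k) > 0) \<and> ((i \<in> J) \<noteq> (k \<in> J) \<longrightarrow> A $$ (i,k) < 0)"
      using st unfolding STJS_def strictly_sign_symmetric_on_def by blast
    have single: "\<exists>a. ?es ! p = {a} \<and> a < n" if "p < length ?es" for p
    proof -
      have "card (?es ! p) = 1" "?es ! p \<subseteq> {0..<n}" using sub_list_nth[OF that] True by auto
      thus ?thesis by (metis card_1_singletonE atLeastLessThan_iff insert_subset)
    qed
    define el where "el = (\<lambda>p. THE a. ?es ! p = {a})"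
    have el: "?es ! p = {el p}" "el p < n" if "p < length ?es" for p
      using single[OF that] unfolding el_def by auto
    have ent: "cmpd A j $$ (p,q) = A $$ (el p, el q)" if pq: "p < length ?es" "q < length ?es" for p q
    proof -
      have "cmpd A j $$ (p,q) = det (sub A 1 {el p} {el q})" using cmpd_index[OF A pq] el[OF pq(1)] el[OF pq(2)] True by simp
      also have "sub A 1 {el p} {el q} = mat 1 1 (\<lambda>_. A $$ (el p, el q))"
      proof -
        have "pick {a} 0 = a" for a by (auto intro: Least_equality)
        thus ?thesis by (intro eq_matI, auto simp: sub_def)
      qed
      also have "det \<dots> = A $$ (el p, el q)"
        by (subst det_upper_triangular[of _ 1], auto simp: upper_triangular_def diag_mat_def)
      finally show ?thesis .
    qed
    show ?thesis
      by (rule exI[of _ "{p. el p \<in> J}"], use J el ent in auto)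
  next
    case False
    hence j2: "j \<in> {2..n}" using j by auto
    obtain J where J: "J \<subseteq> {I. I \<subseteq> {..<n} \<and> card I = j}" and
      Jp: "\<forall>I\<in>{I. I \<subseteq> {..<n} \<and> card I = j}. \<forall>K\<in>{I. I \<subseteq> {..<n} \<and> card I = j}.
        ((I \<in> J) = (K \<in> J) \<longrightarrow> compound_entry A I K > 0) \<and> ((I \<in> J) \<noteq> (K \<in> J) \<longrightarrow> compound_entry A I K < 0)"
      using st j2 unfolding STJS_def strictly_sign_symmetric_on_def by blast
    have ent: "cmpd A j $$ (p,q) = compound_entry A (?es ! p) (?es ! q)" if pq: "p < length ?es" "q < length ?es" for p q
    proof -
      define I where "I = ?es ! p"
      define K where "K = ?es ! q"
      have I: "I \<subseteq> {0..<n}" "card I = j" using sub_list_nth[OF pq(1)] I_def by auto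
      have K: "K \<subseteq> {0..<n}" "card K = j" using sub_list_nth[OF pq(2)] K_def by auto
      have sI: "{i. i < dim_row A \<and> i \<in> I} = I" using I A by auto
      have sK: "{i. i < dim_col A \<and> i \<in> K} = K" using K A by auto
      have cI: "card {i. i < dim_row A \<and> i \<in> I} = j" unfolding sI using I by simp
      have cK: "card {i. i < dim_col A \<and> i \<in> K} = j" unfolding sK using K by simp
      have "submatrix A I K = sub A j I K" by (rule eq_matI, unfold dim_submatrix cI cK, auto simp: sub_def submatrix_index cI cK)
      thus ?thesis using cmpd_index[OF A pq] unfolding compound_entry_def I_def K_def by simp
    qed
    have mem: "?es ! p \<in> {I. I \<subseteq> {..<n} \<and> card I = j}" if "p < length ?es" for p
      using sub_list_nth[OF that] by auto
    show ?thesis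
      by (rule exI[of _ "{p. ?es ! p \<in> J}"], use Jp mem ent in auto)
  qed
qed

theorem theorem31:
  fixes A :: "real mat" and n :: nat
  assumes "n \<ge> 1" and "STJS n A"
  shows "\<exists>ev :: nat \<Rightarrow> real.
           char_poly A = (\<Prod>i<n. [:- ev i, 1:]) \<and>
           (\<forall>i. Suc i < n \<longrightarrow> ev (Suc i) < ev i) \<and>
           ev (n - 1) > 0 \<and>
           spectral_radius (map_mat complex_of_real A) = ev 0"
proof -
  note n = assms(1) and st = assms(2)
  have A: "A \<in> carrier_mat n n" using st unfolding STJS_def by auto
  let ?Ac = "map_mat complex_of_real A"
  have Ac: "?Ac \<in> carrier_mat n n" using A by simp
  obtain as where as: "char_poly ?Ac = (\<Prod>a\<leftarrow>as. [:- a, 1:])" "length as = n"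
    using char_poly_factorized[OF Ac] by blast
  define lam where "lam = (\<lambda>i. as ! i)"
  have hyp: "\<forall>j. \<exists>T \<rho>. j \<in> {1..n} \<longrightarrow> (T \<subseteq> {0..<n} \<and> card T = j \<and> \<rho> > 0 \<and> (\<Prod>i\<in>T. lam i) = complex_of_real \<rho>)
     \<and> (\<forall>L. L \<subseteq> {0..<n} \<longrightarrow> card L = j \<longrightarrow> L \<noteq> T \<longrightarrow> cmod (\<Prod>i\<in>L. lam i) < cmod (\<Prod>i\<in>T. lam i))"
  proof
    fix j
    show "\<exists>T \<rho>. j \<in> {1..n} \<longrightarrow> (T \<subseteq> {0..<n} \<and> card T = j \<and> \<rho> > 0 \<and> (\<Prod>i\<in>T. lam i) = complex_of_real \<rho>)
     \<and> (\<forall>L. L \<subseteq> {0..<n} \<longrightarrow> card L = j \<longrightarrow> L \<noteq> T \<longrightarrow> cmod (\<Prod>i\<in>L. lam i) < cmod (\<Prod>i\<in>T. lam i))"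
    proof (cases "j \<in> {1..n}")
      case False thus ?thesis by blast
    next
      case True
      hence j: "j \<in> {1..n}" .
      let ?es = "sub_list n j"
      let ?N = "length ?es"
      let ?C = "cmpd A j"
      have C: "?C \<in> carrier_mat ?N ?N" by (rule cmpd_carrier[OF A])
      have "{0..<j} \<in> set ?es" unfolding sub_list_set using j by auto
      hence N: "?N > 0" by (cases ?es, auto)
      obtain J where J: "\<forall>p q. p < ?N \<longrightarrow> q < ?N \<longrightarrow>
         ((p \<in> J) = (q \<in> J) \<longrightarrow> ?C $$ (p,q) > 0) \<and> ((p \<in> J) \<noteq> (q \<in> J) \<longrightarrow> ?C $$ (p,q) < 0)"
        using sign_cmpd[OF st j] by blast
      have cp: "char_poly (map_mat complex_of_real ?C) = (\<Prod>t<?N. [:- (\<Prod>i\<in>?es ! t. lam i), 1:])"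
        unfolding cmpd_map[OF A] lam_def by (rule char_poly_cmpd_c[OF Ac as(1)])
      obtain \<rho> t0 where rho: "\<rho> > 0" "t0 < ?N" "(\<Prod>i\<in>?es ! t0. lam i) = complex_of_real \<rho>"
        and oth: "\<And>t. t < ?N \<Longrightarrow> t \<noteq> t0 \<Longrightarrow> cmod (\<Prod>i\<in>?es ! t. lam i) < \<rho>"
        using sign_sym_perron[OF C N _ cp, of J] J by blast
      define T where "T = ?es ! t0"
      have T: "T \<subseteq> {0..<n}" "card T = j" using sub_list_nth[OF rho(2)] unfolding T_def by auto
      have "cmod (\<Prod>i\<in>L. lam i) < cmod (\<Prod>i\<in>T. lam i)" if L: "L \<subseteq> {0..<n}" "card L = j" "L \<noteq> T" for L
      proof -
        have "L \<in> set ?es" unfolding sub_list_set using L by auto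
        then obtain t where t: "t < ?N" "L = ?es ! t" by (auto simp: in_set_conv_nth)
        have "t \<noteq> t0" using t L(3) unfolding T_def by auto
        hence "cmod (\<Prod>i\<in>L. lam i) < \<rho>" using oth[OF t(1)] t(2) by simp
        thus ?thesis using rho(1,3) unfolding T_def by simp
      qed
      thus ?thesis using T rho unfolding T_def by blast
    qed
  qed
  then obtain Top rh where TR: "\<And>j. j \<in> {1..n} \<Longrightarrow> (Top j \<subseteq> {0..<n} \<and> card (Top j) = j \<and> rh j > 0 \<and> (\<Prod>i\<in>Top j. lam i) = complex_of_real (rh j))
     \<and> (\<forall>L. L \<subseteq> {0..<n} \<longrightarrow> card L = j \<longrightarrow> L \<noteq> Top j \<longrightarrow> cmod (\<Prod>i\<in>L. lam i) < cmod (\<Prod>i\<in>Top j. lam i))"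
    by metis
  obtain ev where ev: "(\<Prod>i<n. [:- lam i, 1:]) = (\<Prod>k<n. [:- complex_of_real (ev k), 1:])"
    "\<forall>k. Suc k < n \<longrightarrow> ev (Suc k) < ev k" "\<forall>k<n. ev k > 0" "lam ` {..<n} = (\<lambda>k. complex_of_real (ev k)) ` {..<n}"
    using combi[where lam=lam and Top=Top and rh=rh, OF n] TR by blast
  have cpc: "char_poly ?Ac = (\<Prod>k<n. [:- complex_of_real (ev k), 1:])"
  proof -
    have "char_poly ?Ac = (\<Prod>i<n. [:- lam i, 1:])" unfolding as(1) lam_def
      by (subst prod.list_conv_set_nth, simp add: as(2) atLeast0LessThan)
    thus ?thesis using ev(1) by simp
  qed
  have cpr: "char_poly A = (\<Prod>k<n. [:- ev k, 1:])"
  proof -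
    interpret mp: map_poly_comm_ring_hom "complex_of_real" by unfold_locales
    have "map_poly complex_of_real (char_poly A) = char_poly ?Ac" by (rule of_real_hom.char_poly_hom[OF A, symmetric])
    also have "\<dots> = map_poly complex_of_real (\<Prod>k<n. [:- ev k, 1:])" unfolding cpc mp.hom_prod by simp
    finally have eq: "map_poly complex_of_real (char_poly A) = map_poly complex_of_real (\<Prod>k<n. [:- ev k, 1:])" .
    show ?thesis
    proof (rule poly_eqI)
      fix i
      have "coeff (map_poly complex_of_real (char_poly A)) i = coeff (map_poly complex_of_real (\<Prod>k<n. [:- ev k, 1:])) i"
        using eq by simp
      thus "coeff (char_poly A) i = coeff (\<Prod>k<n. [:- ev k, 1:]) i" by (simp add: coeff_map_poly)
    qed
  qed
  have ev_le: "ev k \<le> ev 0" if "k < n" for k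
    using that
  proof (induct k)
    case (Suc k) thus ?case using ev(2) by (metis Suc_lessD less_imp_le order_trans)
  qed simp
  have spec: "spectrum ?Ac = (\<lambda>k. complex_of_real (ev k)) ` {..<n}"
    unfolding spectrum_root_char_poly[OF Ac] cpc poly_prod by (auto simp: prod_zero_iff)
  have "spectral_radius ?Ac = Max (cmod ` (\<lambda>k. complex_of_real (ev k)) ` {..<n})"
    unfolding spectral_radius_def spec ..
  also have "\<dots> = ev 0"
  proof (rule Max_eqI)
    show "finite (cmod ` (\<lambda>k. complex_of_real (ev k)) ` {..<n})" by simp
    show "\<And>y. y \<in> cmod ` (\<lambda>k. complex_of_real (ev k)) ` {..<n} \<Longrightarrow> y \<le> ev 0"
      using ev(3) ev_le by auto
    have "ev 0 > 0" using ev(3) n by simp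
    hence e0: "cmod (complex_of_real (ev 0)) = ev 0" by simp
    have "complex_of_real (ev 0) \<in> (\<lambda>k. complex_of_real (ev k)) ` {..<n}" using n by auto
    thus "ev 0 \<in> cmod ` (\<lambda>k. complex_of_real (ev k)) ` {..<n}" using e0 by (metis image_eqI)
  qed
  finally have sr: "spectral_radius ?Ac = ev 0" .
  have "ev (n - 1) > 0" using ev(3) n by simp
  thus ?thesis using cpr ev(2) sr by blast
qed


end
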